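(* Let $n\ge3$, let $G^\star=([n],E^\star)$ be a directed graph (directed cycles allowed), let $S_1=\operatorname{argmin}_{\mathcal S}|E^{(1)}|$, $S_2=\operatorname{argmin}_{S_1}|E^{(2)}|$, $S_3=\operatorname{argmin}_{S_2}|E^{(3)}|$, $S_4=\operatorname{argmin}_{S_3}|E^{(4)}|$, and define $S_5^{(1)}=S_4$ and $S_5^{(t)}=\operatorname{argmax}_{(\mathcal P,\pi)\in S_5^{(t-1)}}|D^{(t)}_{(\mathcal P,\pi)}|$ for $t\in\{2,\dots,n-2\}$. Then (i) the partially ordered partition associated with $G^\star$ belongs to $S_5^{(t)}$ for all $t\in\{1,\dots,n-2\}$, and (ii) for all $t\in\{1,\dots,n-2\}$ and $(\mathcal P,\pi)\in S_5^{(t)}$, $(a_0,a_1,\dots,a_{t+1})\in D^{(t)}_{(\mathcal P,\pi)}$ if and only if $(a_0,a_1,a_2)$ and $(a_{t-1},a_t,a_{t+1})$ are mutually exclusive with respect to the uncovered itinerary $(a_0,a_1,\dots,a_{t+1})$ in $G^\star$.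
   Context: $[n]=\{1,\dots,n\}$. The observed distribution is Markov and faithful to $G^\star$; for distinct $a,b$ and $Z\subseteq[n]\setminus\{a,b\}$, $a\perp\!\!\!\perp b\mid Z$ means $a$ and $b$ are $d$-separated given $Z$ in $G^\star$, and $a\not\perp\!\!\!\perp b\mid Z$ is its negation. In a directed graph, $a$ is an ancestor of $b$ if $a=b$ or there is a directed path from $a$ to $b$. Distinct $a,b$ are $p$-adjacent in a directed graph $G$ if there is an edge between them, or they have a common child which is an ancestor of $a$ or of $b$. For $t\ge1$, triples $(a_0,a_1,a_2)$ and $(a_{t-1},a_t,a_{t+1})$ are mutually exclusive with respect to the uncovered itinerary $(a_0,\dots,a_{t+1})$ in $G$ if: $a_i,a_{i-1}$ are $p$-adjacent for $i\in\{1,\dots,t+1\}$; $a_i,a_j$ are not $p$-adjacent for $i\in\{2,\dots,t+1\}$, $j\in\{0,\dots,i-2\}$; $a_i$ is an ancestor of $a_{i+1}$ for $i\in\{1,\dots,t-1\}$; $a_i$ is an ancestor of $a_{i-1}$ for $i\in\{2,\dots,t\}$; and $a_1$ is an ancestor of neither $a_0$ nor $a_{t+1}$. $\mathcal S$ is the set of pairs $(\mathcal P,\pi)$ with $\mathcal P$ a partition of $[n]$ and $\pi$ a partial order on $\mathcal P$; $C_1\le_\pi C_2$ iff $(C_1,C_2)\in\pi$; $C_{i,\mathcal P}$ is the block containing $i$; $C\le_\pi\max\{C_1,\dots,C_t\}$ means $C\le_\pi C_i$ for some $i$. The strongly connected components of a directed graph $G$ are the classes of $i\sim j$ iff $i=j$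 or there are directed paths $i\to j$ and $j\to i$; on them $C_1\le_G C_2$ iff $C_1=C_2$ or there is a directed path from a vertex of $C_1$ to a vertex of $C_2$. The partially ordered partition associated with $G$ is (its set of strongly connected components, $\le_G$). For $(\mathcal P,\pi)\in\mathcal S$ (all sets indexed by $(\mathcal P,\pi)$): $E^{(1)}=\{(a,b): a\ne b,\ a\not\perp\!\!\!\perp b\mid\bigcup\{C\in\mathcal P: C\le_\pi\max\{C_{a,\mathcal P},C_{b,\mathcal P}\}\}\setminus\{a,b\}\}$; $E^{(2)}$: $(a,b,c)$ distinct, $(a,b),(c,b)\in E^{(1)}$, $(a,c)\notin E^{(1)}$, $C_{b,\mathcal P}\le_\pi\max\{C_{a,\mathcal P},C_{c,\mathcal P}\}$; $E^{(3)}$: $(a,b,c)$ distinct, $(a,b),(c,b)\in E^{(1)}$, $(a,c)\notin E^{(1)}$, $a\not\perp\!\!\!\perp c\mid\bigcup\{C\in\mathcal P: C\le_\pi\max\{C_{a,\mathcal P},C_{b,\mathcal P},C_{c,\mathcal P}\}\}\setminus\{a,c\}$; $E^{(4)}$: pairs $((a,b_1,c),(a,b_2,c))$ with $a,b_1,c$ distinct, $a,b_2,c$ distinct, $(a,b_1),(c,b_1),(a,b_2),(c,b_2)\in E^{(1)}$, $(a,c)\notin E^{(1)}$, $(a,b_1,c),(a,b_2,c)\notin E^{(2)}\cup E^{(3)}$, $C_{b_1,\mathcal P}\le_\pi C_{b_2,\mathcal P}$. For $t\in\{1,\dots,n-2\}$, $D^{(t)}$ is the set of $(a_0,\dots,a_{t+1})\in[n]^{t+2}$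 of distinct elements with $(a_i,a_{i+1})\in E^{(1)}$ for $i\in\{0,\dots,t\}$, $(a_i,a_j)\notin E^{(1)}$ for $i\in\{2,\dots,t+1\}$, $j\in\{0,\dots,i-2\}$, $C_{a_1,\mathcal P}=\dots=C_{a_t,\mathcal P}$, and not $C_{a_1,\mathcal P}\le_\pi\max\{C_{a_0,\mathcal P},C_{a_{t+1},\mathcal P}\}$. *)

theory Defs
  imports Main "HOL-Library.Disjoint_Sets"
begin

type_synonym pop = "nat set set \<times> (nat set \<times> nat set) set"

definition anc :: "(nat \<times> nat) set \<Rightarrow> nat \<Rightarrow> nat \<Rightarrow> bool" where
  "anc E a b \<longleftrightarrow> (a, b) \<in> E\<^sup>*"

text \<open>Colliders must be ancestors of Z, non-colliders must lie outside Z.\<close>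
definition dconn_path :: "(nat \<times> nat) set \<Rightarrow> nat set \<Rightarrow> nat list \<Rightarrow> bool list \<Rightarrow> bool" where
  "dconn_path E Z vs ds \<longleftrightarrow>
     length vs \<ge> 2 \<and> distinct vs \<and> length ds = length vs - 1 \<and>
     (\<forall>i < length ds. (if ds ! i then (vs ! i, vs ! Suc i) \<in> E else (vs ! Suc i, vs ! i) \<in> E)) \<and>
     (\<forall>i. 0 < i \<and> i < length ds \<longrightarrow>
        (if ds ! (i - 1) \<and> \<not> ds ! i
         then (\<exists>z\<in>Z. anc E (vs ! i) z)
         else vs ! i \<notin> Z))"

definition dsep :: "(nat \<times> nat) set \<Rightarrow> nat \<Rightarrow> nat \<Rightarrow> nat set \<Rightarrow> bool" where
  "dsep E a b Z \<longleftrightarrow>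
     \<not> (\<exists>vs ds. dconn_path E Z vs ds \<and> hd vs = a \<and> last vs = b)"

definition POPs :: "nat \<Rightarrow> pop set" where
  "POPs n = {(P, pi). partition_on {1..n} P \<and> partial_order_on P pi}"

definition blk :: "nat set set \<Rightarrow> nat \<Rightarrow> nat set" where
  "blk P i = (THE C. C \<in> P \<and> i \<in> C)"

definition below :: "pop \<Rightarrow> nat set set \<Rightarrow> nat set" where
  "below x Cs = \<Union>{C \<in> fst x. \<exists>C'\<in>Cs. (C, C') \<in> snd x}"

definition E1 :: "nat \<Rightarrow> (nat \<times> nat) set \<Rightarrow> pop \<Rightarrow> (nat \<times> nat) set" where
  "E1 n E x = {(a, b). a \<in> {1..n} \<and> b \<in> {1..n} \<and> a \<noteq> b \<and>
     \<not> dsep E a b (below x {blk (fst x) a, blk (fst x) b} - {a, b})}"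

definition E2 :: "nat \<Rightarrow> (nat \<times> nat) set \<Rightarrow> pop \<Rightarrow> (nat \<times> nat \<times> nat) set" where
  "E2 n E x = {(a, b, c). a \<noteq> b \<and> a \<noteq> c \<and> b \<noteq> c \<and>
     (a, b) \<in> E1 n E x \<and> (c, b) \<in> E1 n E x \<and> (a, c) \<notin> E1 n E x \<and>
     ((blk (fst x) b, blk (fst x) a) \<in> snd x \<or> (blk (fst x) b, blk (fst x) c) \<in> snd x)}"

definition E3 :: "nat \<Rightarrow> (nat \<times> nat) set \<Rightarrow> pop \<Rightarrow> (nat \<times> nat \<times> nat) set" where
  "E3 n E x = {(a, b, c). a \<noteq> b \<and> a \<noteq> c \<and> b \<noteq> c \<and>
     (a, b) \<in> E1 n E x \<and> (c, b) \<in> E1 n E x \<and> (a, c) \<notin> E1 n E x \<and>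
     \<not> dsep E a c (below x {blk (fst x) a, blk (fst x) b, blk (fst x) c} - {a, c})}"

definition E4 :: "nat \<Rightarrow> (nat \<times> nat) set \<Rightarrow> pop \<Rightarrow>
    ((nat \<times> nat \<times> nat) \<times> (nat \<times> nat \<times> nat)) set" where
  "E4 n E x = {((a, b1, c), (a', b2, c')). a' = a \<and> c' = c \<and>
     a \<noteq> b1 \<and> a \<noteq> c \<and> b1 \<noteq> c \<and> a \<noteq> b2 \<and> b2 \<noteq> c \<and>
     (a, b1) \<in> E1 n E x \<and> (c, b1) \<in> E1 n E x \<and>
     (a, b2) \<in> E1 n E x \<and> (c, b2) \<in> E1 n E x \<and> (a, c) \<notin> E1 n E x \<and>
     (a, b1, c) \<notin> E2 n E x \<union> E3 n E x \<and> (a, b2, c) \<notin> E2 n E x \<union> E3 n E x \<and>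
     (blk (fst x) b1, blk (fst x) b2) \<in> snd x}"

definition Dt :: "nat \<Rightarrow> (nat \<times> nat) set \<Rightarrow> nat \<Rightarrow> pop \<Rightarrow> nat list set" where
  "Dt n E t x = {as. length as = t + 2 \<and> set as \<subseteq> {1..n} \<and> distinct as \<and>
     (\<forall>i \<le> t. (as ! i, as ! (i + 1)) \<in> E1 n E x) \<and>
     (\<forall>i \<in> {2..t+1}. \<forall>j. j + 2 \<le> i \<longrightarrow> (as ! i, as ! j) \<notin> E1 n E x) \<and>
     (\<forall>i \<in> {1..t}. blk (fst x) (as ! i) = blk (fst x) (as ! 1)) \<and>
     \<not> ((blk (fst x) (as ! 1), blk (fst x) (as ! 0)) \<in> snd x \<or>
        (blk (fst x) (as ! 1), blk (fst x) (as ! (t + 1))) \<in> snd x)}"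

definition argmin_on :: "'a set \<Rightarrow> ('a \<Rightarrow> nat) \<Rightarrow> 'a set" where
  "argmin_on X f = {x \<in> X. \<forall>y \<in> X. f x \<le> f y}"

definition argmax_on :: "'a set \<Rightarrow> ('a \<Rightarrow> nat) \<Rightarrow> 'a set" where
  "argmax_on X f = {x \<in> X. \<forall>y \<in> X. f y \<le> f x}"

definition S1 :: "nat \<Rightarrow> (nat \<times> nat) set \<Rightarrow> pop set" where
  "S1 n E = argmin_on (POPs n) (\<lambda>x. card (E1 n E x))"
definition S2 :: "nat \<Rightarrow> (nat \<times> nat) set \<Rightarrow> pop set" where
  "S2 n E = argmin_on (S1 n E) (\<lambda>x. card (E2 n E x))"
definition S3 :: "nat \<Rightarrow> (nat \<times> nat) set \<Rightarrow> pop set" where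
  "S3 n E = argmin_on (S2 n E) (\<lambda>x. card (E3 n E x))"
definition S4 :: "nat \<Rightarrow> (nat \<times> nat) set \<Rightarrow> pop set" where
  "S4 n E = argmin_on (S3 n E) (\<lambda>x. card (E4 n E x))"

text \<open>S5 n E t for t >= 1 (the value at t = 0 is an unused dummy).\<close>
fun S5 :: "nat \<Rightarrow> (nat \<times> nat) set \<Rightarrow> nat \<Rightarrow> pop set" where
  "S5 n E 0 = S4 n E"
| "S5 n E (Suc 0) = S4 n E"
| "S5 n E (Suc (Suc k)) =
     argmax_on (S5 n E (Suc k)) (\<lambda>x. card (Dt n E (Suc (Suc k)) x))"

definition scc :: "nat \<Rightarrow> (nat \<times> nat) set \<Rightarrow> nat \<Rightarrow> nat set" where
  "scc n E i = {j \<in> {1..n}. (i, j) \<in> E\<^sup>* \<and> (j, i) \<in> E\<^sup>*}"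

definition pop_of :: "nat \<Rightarrow> (nat \<times> nat) set \<Rightarrow> pop" where
  "pop_of n E = (let P = scc n E ` {1..n} in
     (P, {(C1, C2). C1 \<in> P \<and> C2 \<in> P \<and>
          (C1 = C2 \<or> (\<exists>u \<in> C1. \<exists>v \<in> C2. (u, v) \<in> E\<^sup>*))}))"

definition padj :: "(nat \<times> nat) set \<Rightarrow> nat \<Rightarrow> nat \<Rightarrow> bool" where
  "padj E a b \<longleftrightarrow> a \<noteq> b \<and>
     ((a, b) \<in> E \<or> (b, a) \<in> E \<or>
      (\<exists>c. (a, c) \<in> E \<and> (b, c) \<in> E \<and> (anc E c a \<or> anc E c b)))"

definition mutex :: "(nat \<times> nat) set \<Rightarrow> nat \<Rightarrow> nat list \<Rightarrow> bool" where
  "mutex E t as \<longleftrightarrow> t \<ge> 1 \<and> length as = t + 2 \<and> distinct as \<and>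
     (\<forall>i \<in> {1..t+1}. padj E (as ! i) (as ! (i - 1))) \<and>
     (\<forall>i \<in> {2..t+1}. \<forall>j. j + 2 \<le> i \<longrightarrow> \<not> padj E (as ! i) (as ! j)) \<and>
     (\<forall>i \<in> {1..t-1}. anc E (as ! i) (as ! (i + 1))) \<and>
     (\<forall>i \<in> {2..t}. anc E (as ! i) (as ! (i - 1))) \<and>
     \<not> anc E (as ! 1) (as ! 0) \<and> \<not> anc E (as ! 1) (as ! (t + 1))"

end

theory Submission
  imports Defs
begin

definition dwalk :: "(nat \<times> nat) set \<Rightarrow> nat set \<Rightarrow> nat list \<Rightarrow> bool list \<Rightarrow> bool" where
  "dwalk E Z vs ds \<longleftrightarrow>
     length vs \<ge> 2 \<and> length ds = length vs - 1 \<and>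
     (\<forall>i < length ds. (if ds ! i then (vs ! i, vs ! Suc i) \<in> E else (vs ! Suc i, vs ! i) \<in> E)) \<and>
     (\<forall>i. 0 < i \<and> i < length ds \<longrightarrow>
        (if ds ! (i - 1) \<and> \<not> ds ! i
         then (\<exists>z\<in>Z. anc E (vs ! i) z)
         else vs ! i \<notin> Z))"

lemma dconn_path_iff: "dconn_path E Z vs ds \<longleftrightarrow> dwalk E Z vs ds \<and> distinct vs"
  unfolding dconn_path_def dwalk_def by auto

lemma walk_fwd:
  assumes w: "dwalk E Z vs ds" and i: "0 < i" "i < length ds" and p: "ds ! (i-1)"
    and nz: "\<not> (\<exists>z\<in>Z. anc E (vs ! i) z)"
  shows "i \<le> l \<Longrightarrow> l < length ds \<Longrightarrow> ds ! l \<and> (vs ! i, vs ! Suc l) \<in> E\<^sup>*"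
proof (induction l rule: dec_induct)
  case base
  have "ds ! i"
  proof (rule ccontr)
    assume "\<not> ds ! i"
    with w i p have "\<exists>z\<in>Z. anc E (vs ! i) z" unfolding dwalk_def by (metis (no_types, lifting))
    with nz show False by blast
  qed
  moreover have "(vs ! i, vs ! Suc i) \<in> E" using w i \<open>ds ! i\<close> unfolding dwalk_def by metis
  ultimately show ?case by blast
next
  case (step m)
  then have IH: "ds ! m" "(vs ! i, vs ! Suc m) \<in> E\<^sup>*" by auto
  have sm: "0 < Suc m" "Suc m < length ds" using step by auto
  have "ds ! Suc m"
  proof (rule ccontr)
    assume "\<not> ds ! Suc m"
    with w sm IH(1) have "\<exists>z\<in>Z. anc E (vs ! Suc m) z" unfolding dwalk_def
      by (metis (no_types, lifting) diff_Suc_1)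
    then obtain z where "z \<in> Z" "(vs ! Suc m, z) \<in> E\<^sup>*" unfolding anc_def by blast
    with IH(2) have "anc E (vs ! i) z" unfolding anc_def by simp
    with nz \<open>z \<in> Z\<close> show False by blast
  qed
  moreover have "(vs ! Suc m, vs ! Suc (Suc m)) \<in> E" using w sm \<open>ds ! Suc m\<close> unfolding dwalk_def by metis
  ultimately show ?case using IH(2) by (meson rtrancl.rtrancl_into_rtrancl)
qed

lemma walk_to_path:
  "dwalk E Z vs ds \<Longrightarrow> hd vs \<noteq> last vs \<Longrightarrow>
   \<exists>vs' ds'. dconn_path E Z vs' ds' \<and> hd vs' = hd vs \<and> last vs' = last vs"
proof (induction "length vs" arbitrary: vs ds rule: less_induct)
  case less
  note w = less.prems(1)
  define L where "L = length vs"
  have L2: "L \<ge> 2" and lds: "length ds = L - 1" using w unfolding dwalk_def L_def by auto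
  have ne: "vs \<noteq> []" using L2 unfolding L_def by auto
  have hdv: "hd vs = vs ! 0" using ne by (simp add: hd_conv_nth)
  have lastv: "last vs = vs ! (L - 1)" using ne unfolding L_def by (simp add: last_conv_nth)
  show ?case
  proof (cases "distinct vs")
    case True then show ?thesis using w by (auto simp: dconn_path_iff)
  next
    case False
    then obtain i j where ij: "i < j" "j < L" "vs ! i = vs ! j"
      unfolding distinct_conv_nth L_def by (metis linorder_neqE_nat)
    define vs' where "vs' = take (Suc i) vs @ drop (Suc j) vs"
    define ds' where "ds' = take i ds @ drop j ds"
    have lvs': "length vs' = L - (j - i)" unfolding vs'_def L_def using ij L_def by auto
    have lds': "length ds' = L - 1 - (j - i)" unfolding ds'_def using ij lds by auto
    have notboth: "\<not> (i = 0 \<and> j = L - 1)" using less.prems(2) hdv lastv ij by auto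
    have N1: "vs' ! l = vs ! l" if "l \<le> i" for l
      unfolding vs'_def using that ij L_def by (auto simp: nth_append)
    have N2: "vs' ! l = vs ! (l + j - i)" if "i \<le> l" "l < length vs'" for l
    proof (cases "l = i")
      case True then show ?thesis using N1 ij by simp
    next
      case False
      then have "l \<ge> Suc i" using that by simp
      moreover have "length (take (Suc i) vs) = Suc i" using ij L_def by simp
      ultimately have "vs' ! l = drop (Suc j) vs ! (l - Suc i)" unfolding vs'_def by (simp add: nth_append)
      also have "\<dots> = vs ! (Suc j + (l - Suc i))" using that lvs' ij L_def by (subst nth_drop) auto
      also have "Suc j + (l - Suc i) = l + j - i" using \<open>l \<ge> Suc i\<close> ij by simp
      finally show ?thesis .
    qed
    have D1: "ds' ! l = ds ! l" if "l < i" for l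
      unfolding ds'_def using that ij lds by (auto simp: nth_append)
    have D2: "ds' ! l = ds ! (l + j - i)" if "i \<le> l" "l < length ds'" for l
    proof -
      have "length (take i ds) = i" using ij lds by simp
      then have "ds' ! l = drop j ds ! (l - i)" unfolding ds'_def using that by (simp add: nth_append)
      also have "\<dots> = ds ! (j + (l - i))" using that lds' ij lds by (subst nth_drop) auto
      also have "j + (l - i) = l + j - i" using that ij by simp
      finally show ?thesis .
    qed
    have w': "dwalk E Z vs' ds'"
      unfolding dwalk_def
    proof (intro conjI allI impI)
      show "2 \<le> length vs'" using lvs' notboth ij by auto
      show "length ds' = length vs' - 1" using lvs' lds' by simp
    next
      fix l assume l: "l < length ds'"
      show "if ds' ! l then (vs' ! l, vs' ! Suc l) \<in> E else (vs' ! Suc l, vs' ! l) \<in> E"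
      proof (cases "l < i")
        case True
        then have "l < length ds" using ij lds by simp
        then have "if ds ! l then (vs ! l, vs ! Suc l) \<in> E else (vs ! Suc l, vs ! l) \<in> E"
          using w unfolding dwalk_def by blast
        then show ?thesis using True N1[of l] N1[of "Suc l"] D1[of l] by simp
      next
        case False
        then have "l + j - i < length ds" using l lds' lds ij by simp
        then have "if ds ! (l + j - i) then (vs ! (l + j - i), vs ! Suc (l + j - i)) \<in> E
                   else (vs ! Suc (l + j - i), vs ! (l + j - i)) \<in> E"
          using w unfolding dwalk_def by blast
        moreover have "Suc l + j - i = Suc (l + j - i)" using False ij by simp
        moreover have "vs' ! l = vs ! (l + j - i)" using False N2[of l] l lvs' lds' by simp
        moreover have "Suc l < length vs'" using l lvs' lds' by arith
        moreover have "vs' ! Suc l = vs ! Suc (l + j - i)"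
          using False N2[of "Suc l"] \<open>Suc l < length vs'\<close> \<open>Suc l + j - i = Suc (l + j - i)\<close> by simp
        ultimately show ?thesis using False D2[of l] l by simp
      qed
    next
      fix l assume l: "0 < l \<and> l < length ds'"
      show "if ds' ! (l - 1) \<and> \<not> ds' ! l then \<exists>z\<in>Z. anc E (vs' ! l) z else vs' ! l \<notin> Z"
      proof (cases "l < i")
        case True
        then have "0 < l \<and> l < length ds" using ij lds l by simp
        then have "if ds ! (l - 1) \<and> \<not> ds ! l then \<exists>z\<in>Z. anc E (vs ! l) z else vs ! l \<notin> Z"
          using w unfolding dwalk_def by blast
        then show ?thesis using True N1[of l] D1[of l] D1[of "l - 1"] by simp
      next
        case False
        show ?thesis
        proof (cases "l = i")
          case False
          with \<open>\<not> l < i\<close> have gi: "l > i" by simp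
          then have "0 < l + j - i \<and> l + j - i < length ds" using l lds' lds ij by simp
          then have "if ds ! (l + j - i - 1) \<and> \<not> ds ! (l + j - i)
                     then \<exists>z\<in>Z. anc E (vs ! (l + j - i)) z else vs ! (l + j - i) \<notin> Z"
            using w unfolding dwalk_def by blast
          moreover have "l - 1 + j - i = l + j - i - 1" using gi by simp
          ultimately show ?thesis using gi N2[of l] D2[of l] D2[of "l - 1"] l lvs' lds' by simp
        next
          case True
          have i0: "0 < i" and jl: "j < length ds" using True l lds' lds ij by auto
          have e1: "ds' ! (i - 1) = ds ! (i - 1)" using D1 i0 by simp
          have e2: "ds' ! i = ds ! j" using D2[of i] True l by simp
          have e3: "vs' ! i = vs ! i" using N1 by simp
          have ci: "if ds ! (i - 1) \<and> \<not> ds ! i then \<exists>z\<in>Z. anc E (vs ! i) z else vs ! i \<notin> Z"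
            using w i0 ij jl unfolding dwalk_def by auto
          have cj: "if ds ! (j - 1) \<and> \<not> ds ! j then \<exists>z\<in>Z. anc E (vs ! j) z else vs ! j \<notin> Z"
            using w i0 ij jl unfolding dwalk_def by auto
          show ?thesis
          proof (cases "ds ! (i - 1) \<and> \<not> ds ! j")
            case True
            have "\<exists>z\<in>Z. anc E (vs ! i) z"
            proof (rule ccontr)
              assume nz: "\<not> (\<exists>z\<in>Z. anc E (vs ! i) z)"
              have "ds ! j \<and> (vs ! i, vs ! Suc j) \<in> E\<^sup>*"
                using walk_fwd[OF w i0 _ _ nz, of j] True ij jl by simp
              with True show False by simp
            qed
            then show ?thesis using True e1 e2 e3 \<open>l = i\<close> by simp
          next
            case False
            have "vs ! i \<notin> Z" using ci cj ij False by (auto split: if_splits)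
            then show ?thesis using False e1 e2 e3 \<open>l = i\<close> by auto
          qed
        qed
      qed
    qed
    have ne': "vs' \<noteq> []" using w' unfolding dwalk_def by auto
    have "length vs' < length vs" using lvs' ij L_def by simp
    moreover have "hd vs' = hd vs"
      using N1[of 0] hdv ne' by (simp add: hd_conv_nth)
    moreover have "last vs' = last vs"
    proof -
      have "length vs' - 1 \<ge> i" using lvs' ij by simp
      moreover have "length vs' - 1 < length vs'" using ne' by simp
      ultimately have "vs' ! (length vs' - 1) = vs ! (length vs' - 1 + j - i)"
        using N2 by blast
      moreover have "length vs' - 1 + j - i = L - 1" using lvs' ij by simp
      ultimately show ?thesis using lastv ne' by (simp add: last_conv_nth)
    qed
    ultimately show ?thesis using less.hyps[of vs' ds'] w' less.prems(2) by metis
  qed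
qed

lemma dwalk_base: "(if d then (a, v) \<in> E else (v, a) \<in> E) \<Longrightarrow> dwalk E Z [a, v] [d]"
  unfolding dwalk_def by auto

lemma dwalk_snoc:
  assumes w: "dwalk E Z vs ds" and lu: "last vs = u" and ld: "last ds = d"
   and e: "if d' then (u, v) \<in> E else (v, u) \<in> E"
   and c: "if d \<and> \<not> d' then (\<exists>z\<in>Z. anc E u z) else u \<notin> Z"
  shows "dwalk E Z (vs @ [v]) (ds @ [d'])"
proof -
  have L: "length vs \<ge> 2" "length ds = length vs - 1" using w unfolding dwalk_def by auto
  have ne: "vs \<noteq> []" "ds \<noteq> []" using L by auto
  have lvs: "vs ! (length ds) = u" using L lu ne by (simp add: last_conv_nth)
  have lds: "ds ! (length ds - 1) = d" using ld ne by (simp add: last_conv_nth)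
  show ?thesis unfolding dwalk_def
  proof (intro conjI allI impI)
    show "2 \<le> length (vs @ [v])" using L by simp
    show "length (ds @ [d']) = length (vs @ [v]) - 1" using L by simp
  next
    fix i assume i: "i < length (ds @ [d'])"
    show "if (ds @ [d']) ! i then ((vs @ [v]) ! i, (vs @ [v]) ! Suc i) \<in> E
          else ((vs @ [v]) ! Suc i, (vs @ [v]) ! i) \<in> E"
    proof (cases "i < length ds")
      case True
      then have "if ds ! i then (vs ! i, vs ! Suc i) \<in> E else (vs ! Suc i, vs ! i) \<in> E"
        using w unfolding dwalk_def by blast
      moreover have "Suc i < length vs" using True L by simp
      ultimately show ?thesis using True L by (simp add: nth_append)
    next
      case False
      then have ii: "i = length ds" using i by simp
      have "i < length vs" using ii L by simp
      then have "(vs @ [v]) ! i = u" using ii lvs by (simp add: nth_append)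
      moreover have "Suc i = length vs" using ii L by simp
      then have "(vs @ [v]) ! Suc i = v" by simp
      moreover have "(ds @ [d']) ! i = d'" using ii by simp
      ultimately show ?thesis using e by simp
    qed
  next
    fix i assume i: "0 < i \<and> i < length (ds @ [d'])"
    show "if (ds @ [d']) ! (i - 1) \<and> \<not> (ds @ [d']) ! i then \<exists>z\<in>Z. anc E ((vs @ [v]) ! i) z
          else (vs @ [v]) ! i \<notin> Z"
    proof (cases "i < length ds")
      case True
      then have "if ds ! (i - 1) \<and> \<not> ds ! i then \<exists>z\<in>Z. anc E (vs ! i) z else vs ! i \<notin> Z"
        using w i unfolding dwalk_def by blast
      moreover have "i < length vs" "i - 1 < length ds" using True L by auto
      ultimately show ?thesis using True L by (simp add: nth_append)
    next
      case False
      then have ii: "i = length ds" using i by simp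
      have "i < length vs" using ii L by simp
      then have "(vs @ [v]) ! i = u" using ii lvs by (simp add: nth_append)
      moreover have "(ds @ [d']) ! (i - 1) = d" using ii lds i by (simp add: nth_append)
      moreover have "(ds @ [d']) ! i = d'" using ii by simp
      ultimately show ?thesis using c by simp
    qed
  qed
qed

inductive bb :: "(nat \<times> nat) set \<Rightarrow> nat set \<Rightarrow> nat \<Rightarrow> nat \<Rightarrow> bool \<Rightarrow> bool" for E Z a where
  st_out: "(a, v) \<in> E \<Longrightarrow> bb E Z a v True"
| st_in: "(v, a) \<in> E \<Longrightarrow> bb E Z a v False"
| ext_out: "bb E Z a u d \<Longrightarrow> u \<notin> Z \<Longrightarrow> (u, v) \<in> E \<Longrightarrow> bb E Z a v True"
| ext_in_nc: "bb E Z a u False \<Longrightarrow> u \<notin> Z \<Longrightarrow> (v, u) \<in> E \<Longrightarrow> bb E Z a v False"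
| ext_in_c: "bb E Z a u True \<Longrightarrow> (\<exists>z\<in>Z. anc E u z) \<Longrightarrow> (v, u) \<in> E \<Longrightarrow> bb E Z a v False"

lemma bb_walk: "bb E Z a v d \<Longrightarrow> \<exists>vs ds. dwalk E Z vs ds \<and> hd vs = a \<and> last vs = v \<and> last ds = d"
proof (induction rule: bb.induct)
  case (st_out v)
  then show ?case using dwalk_base[of True a v E Z] by (intro exI[of _ "[a, v]"] exI[of _ "[True]"]) auto
next
  case (st_in v)
  then show ?case using dwalk_base[of False a v E Z] by (intro exI[of _ "[a, v]"] exI[of _ "[False]"]) auto
next
  case (ext_out u d v)
  then obtain vs ds where w: "dwalk E Z vs ds" "hd vs = a" "last vs = u" "last ds = d" by blast
  have "dwalk E Z (vs @ [v]) (ds @ [True])"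
    by (rule dwalk_snoc[OF w(1) w(3) w(4)]) (use ext_out in auto)
  moreover have "hd (vs @ [v]) = a" using w(1,2) unfolding dwalk_def by (cases vs) auto
  ultimately show ?case by (intro exI[of _ "vs @ [v]"] exI[of _ "ds @ [True]"]) auto
next
  case (ext_in_nc u v)
  then obtain vs ds where w: "dwalk E Z vs ds" "hd vs = a" "last vs = u" "last ds = False" by blast
  have "dwalk E Z (vs @ [v]) (ds @ [False])"
    by (rule dwalk_snoc[OF w(1) w(3) w(4)]) (use ext_in_nc in auto)
  moreover have "hd (vs @ [v]) = a" using w(1,2) unfolding dwalk_def by (cases vs) auto
  ultimately show ?case by (intro exI[of _ "vs @ [v]"] exI[of _ "ds @ [False]"]) auto
next
  case (ext_in_c u v)
  then obtain vs ds where w: "dwalk E Z vs ds" "hd vs = a" "last vs = u" "last ds = True" by blast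
  have "dwalk E Z (vs @ [v]) (ds @ [False])"
    by (rule dwalk_snoc[OF w(1) w(3) w(4)]) (use ext_in_c in auto)
  moreover have "hd (vs @ [v]) = a" using w(1,2) unfolding dwalk_def by (cases vs) auto
  ultimately show ?case by (intro exI[of _ "vs @ [v]"] exI[of _ "ds @ [False]"]) auto
qed

lemma bb_dconn: "bb E Z a b d \<Longrightarrow> a \<noteq> b \<Longrightarrow> \<not> dsep E a b Z"
  using bb_walk[of E Z a b d] walk_to_path unfolding dsep_def by metis

definition AnZ :: "(nat \<times> nat) set \<Rightarrow> nat set \<Rightarrow> nat \<Rightarrow> bool" where
  "AnZ E Z u \<longleftrightarrow> (\<exists>z\<in>Z. anc E u z)"

lemma AnZ_notin: "\<not> AnZ E Z u \<Longrightarrow> u \<notin> Z"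
  unfolding AnZ_def anc_def by auto

lemma AnZ_desc: "\<not> AnZ E Z u \<Longrightarrow> (u, w) \<in> E\<^sup>* \<Longrightarrow> \<not> AnZ E Z w"
  unfolding AnZ_def anc_def by (meson rtrancl_trans)

lemma bb_K:
  assumes "(w, a) \<in> E\<^sup>*"
  shows "\<not> AnZ E Z w \<Longrightarrow> w = a \<or> bb E Z a w False"
  using assms
proof (induction rule: converse_rtrancl_induct)
  case base then show ?case by simp
next
  case (step y z)
  have nz: "\<not> AnZ E Z z" using AnZ_desc[OF step.prems] step.hyps(1) by blast
  then have "z = a \<or> bb E Z a z False" using step.IH by blast
  then show ?case
  proof
    assume "z = a" then show ?thesis using step.hyps(1) bb.st_in by blast
  next
    assume "bb E Z a z False"
    then show ?thesis using bb.ext_in_nc AnZ_notin[OF nz] step.hyps(1) by blast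
  qed
qed

lemma bb_K':
  assumes "(u, w) \<in> E\<^sup>*" and st: "u = a \<or> (\<exists>d. bb E Z a u d)" and nz: "\<not> AnZ E Z u"
  shows "w = u \<or> bb E Z a w True"
  using assms(1)
proof (induction rule: rtrancl_induct)
  case base then show ?case by simp
next
  case (step y z)
  from step.IH show ?case
  proof
    assume "y = u"
    then show ?thesis using st step.hyps(2) bb.st_out bb.ext_out AnZ_notin[OF nz] by metis
  next
    assume "bb E Z a y True"
    moreover have "y \<notin> Z" using AnZ_notin AnZ_desc[OF nz step.hyps(1)] by blast
    ultimately show ?thesis using bb.ext_out step.hyps(2) by blast
  qed
qed

definition bfree :: "(nat \<times> nat) set \<Rightarrow> nat set \<Rightarrow> nat \<Rightarrow> nat \<Rightarrow> bool" where
  "bfree E Z a u \<longleftrightarrow> u = a \<or> bb E Z a u False \<or> (bb E Z a u True \<and> AnZ E Z u)"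

lemma bb_to_free:
  assumes "bb E Z a u d" and A: "AnZ E Z u \<or> anc E u a \<or> anc E u b"
  shows "bfree E Z a u \<or> (\<exists>d. bb E Z a b d)"
proof (cases d)
  case False then show ?thesis using assms unfolding bfree_def by auto
next
  case True
  show ?thesis
  proof (cases "AnZ E Z u")
    case True then show ?thesis using assms \<open>d\<close> unfolding bfree_def by auto
  next
    case False
    with A have "anc E u a \<or> anc E u b" by blast
    then show ?thesis
    proof
      assume "anc E u a"
      then show ?thesis using bb_K[of u a E Z] False unfolding anc_def bfree_def by blast
    next
      assume "anc E u b"
      then have "b = u \<or> bb E Z a b True" using bb_K'[of u b E a Z] False assms(1) unfolding anc_def by blast
      then show ?thesis using assms(1) by blast
    qed
  qed
qed

lemma bb_step:
  assumes fr: "bfree E Z a u" and uz: "u = a \<or> u \<notin> Z" and pj: "padj E u v"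
    and Au: "AnZ E Z u \<or> anc E u a \<or> anc E u b"
    and Av: "AnZ E Z v \<or> anc E v a \<or> anc E v b"
  shows "(\<exists>d. bb E Z a v d) \<or> (\<exists>d. bb E Z a b d)"
proof -
  have out: "bb E Z a w True" if "(u, w) \<in> E" for w
    using fr uz that bb.st_out bb.ext_out unfolding bfree_def by metis
  have inn: "bb E Z a w False" if "(w, u) \<in> E" for w
    using fr uz that bb.st_in bb.ext_in_nc bb.ext_in_c unfolding bfree_def AnZ_def by metis
  from pj consider "(u, v) \<in> E" | "(v, u) \<in> E"
    | c where "(u, c) \<in> E" "(v, c) \<in> E" "anc E c u \<or> anc E c v"
    unfolding padj_def by blast
  then show ?thesis
  proof cases
    case 1 then show ?thesis using out by blast
  next
    case 2 then show ?thesis using inn by blast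
  next
    case 3
    have bc: "bb E Z a c True" using out 3(1) .
    show ?thesis
    proof (cases "AnZ E Z c")
      case True
      then show ?thesis using bb.ext_in_c[OF bc _ 3(2)] unfolding AnZ_def by blast
    next
      case False
      have "AnZ E Z c \<or> anc E c a \<or> anc E c b"
        using 3(3) Au Av unfolding AnZ_def anc_def by (meson rtrancl_trans)
      then have "bfree E Z a c \<or> (\<exists>d. bb E Z a b d)" using bb_to_free[OF bc] by blast
      then show ?thesis
      proof
        assume "bfree E Z a c"
        then have "c = a \<or> bb E Z a c False" using False unfolding bfree_def by blast
        then show ?thesis using bb.st_in[OF 3(2)] bb.ext_in_nc[OF _ AnZ_notin[OF False] 3(2)] by blast
      qed blast
    qed
  qed
qed

lemma chain_dconn:
  assumes len: "length cs \<ge> 2" and ab: "hd cs \<noteq> last cs"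
    and pj: "\<And>i. Suc i < length cs \<Longrightarrow> padj E (cs ! i) (cs ! Suc i)"
    and int: "\<And>i. 0 < i \<Longrightarrow> Suc i < length cs \<Longrightarrow> cs ! i \<notin> Z"
    and A: "\<And>i. i < length cs \<Longrightarrow> AnZ E Z (cs ! i) \<or> anc E (cs ! i) (hd cs) \<or> anc E (cs ! i) (last cs)"
  shows "\<not> dsep E (hd cs) (last cs) Z"
proof -
  define a where "a = hd cs"
  define b where "b = last cs"
  have h0: "cs ! 0 = a" using len unfolding a_def by (cases cs) auto
  have hl: "cs ! (length cs - 1) = b" using len unfolding b_def by (cases cs rule: rev_cases) auto
  have I: "bfree E Z a (cs ! i) \<or> (\<exists>d. bb E Z a b d)" if "Suc i < length cs" for i
    using that
  proof (induction i)
    case 0 then show ?case using h0 unfolding bfree_def by simp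
  next
    case (Suc i)
    then have "bfree E Z a (cs ! i) \<or> (\<exists>d. bb E Z a b d)" by simp
    then show ?case
    proof
      assume fr: "bfree E Z a (cs ! i)"
      have uz: "cs ! i = a \<or> cs ! i \<notin> Z" using int[of i] h0 Suc.prems by (cases i) auto
      have "(\<exists>d. bb E Z a (cs ! Suc i) d) \<or> (\<exists>d. bb E Z a b d)"
        using bb_step[OF fr uz pj] A Suc.prems unfolding a_def b_def by simp
      then show ?thesis
      proof
        assume "\<exists>d. bb E Z a (cs ! Suc i) d"
        then obtain d where bd: "bb E Z a (cs ! Suc i) d" by blast
        have "AnZ E Z (cs ! Suc i) \<or> anc E (cs ! Suc i) a \<or> anc E (cs ! Suc i) b"
          using A[of "Suc i"] Suc.prems unfolding a_def b_def by simp
        then show ?thesis using bb_to_free[OF bd] by blast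
      qed blast
    qed blast
  qed
  have m: "Suc (length cs - 2) < length cs" "Suc (length cs - 2) = length cs - 1" using len by auto
  have "bfree E Z a (cs ! (length cs - 2)) \<or> (\<exists>d. bb E Z a b d)" using I m by blast
  then have "\<exists>d. bb E Z a b d"
  proof
    assume fr: "bfree E Z a (cs ! (length cs - 2))"
    have uz: "cs ! (length cs - 2) = a \<or> cs ! (length cs - 2) \<notin> Z"
      using int[of "length cs - 2"] h0 len m by (cases "length cs - 2") auto
    have "(\<exists>d. bb E Z a (cs ! Suc (length cs - 2)) d) \<or> (\<exists>d. bb E Z a b d)"
      using bb_step[OF fr uz pj] A m unfolding a_def b_def by simp
    then show ?thesis using m hl by auto
  qed
  then show ?thesis using bb_dconn ab unfolding a_def b_def by blast
qed

lemma path_ancestral: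
  assumes p: "dconn_path E Z vs ds" and ha: "hd vs = a" and lc: "last vs = c"
    and Zsub: "\<And>v. v \<in> Z \<Longrightarrow> \<exists>s\<in>S. anc E v s"
    and Zfull: "\<And>v. \<exists>s\<in>S. anc E v s \<Longrightarrow> v \<noteq> a \<Longrightarrow> v \<noteq> c \<Longrightarrow> v \<in> Z"
    and aS: "a \<in> S" and cS: "c \<in> S"
  shows "(a, c) \<in> E \<or> (c, a) \<in> E \<or> (\<exists>d. (a, d) \<in> E \<and> (c, d) \<in> E \<and> (\<exists>s\<in>S. anc E d s))"
proof -
  have w: "dwalk E Z vs ds" and dist: "distinct vs" using p by (auto simp: dconn_path_iff)
  have L: "length vs \<ge> 2" "length ds = length vs - 1" using w unfolding dwalk_def by auto
  have edge: "\<And>i. i < length ds \<Longrightarrow> (if ds ! i then (vs ! i, vs ! Suc i) \<in> E else (vs ! Suc i, vs ! i) \<in> E)"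
    using w unfolding dwalk_def by blast
  have int: "\<And>i. 0 < i \<Longrightarrow> i < length ds \<Longrightarrow> (if ds ! (i - 1) \<and> \<not> ds ! i
         then (\<exists>z\<in>Z. anc E (vs ! i) z) else vs ! i \<notin> Z)"
    using w unfolding dwalk_def by blast
  have ne: "vs \<noteq> []" using L by auto
  have v0: "vs ! 0 = a" using ha ne by (simp add: hd_conv_nth)
  have vl: "vs ! length ds = c" using lc ne L by (simp add: last_conv_nth)
  define AnS where "AnS v \<longleftrightarrow> (\<exists>s\<in>S. anc E v s)" for v
  have AnS_e: "AnS u" if "(u, v) \<in> E" "AnS v" for u v
    using that unfolding AnS_def anc_def by (meson converse_rtrancl_into_rtrancl)
  have AnS_Z: "AnS v" if "\<exists>z\<in>Z. anc E v z" for v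
    using that Zsub unfolding AnS_def anc_def by (meson rtrancl_trans)
  have fwd: "ds ! l \<longrightarrow> AnS (vs ! l)" if "l \<le> length ds - 1" for l
    using that
  proof (induction l rule: inc_induct)
    case base
    show ?case
    proof
      assume d: "ds ! (length ds - 1)"
      have "length ds - 1 < length ds" "Suc (length ds - 1) = length ds" using L by auto
      then have "(vs ! (length ds - 1), c) \<in> E" using edge[of "length ds - 1"] d vl by simp
      moreover have "AnS c" using cS unfolding AnS_def anc_def by blast
      ultimately show "AnS (vs ! (length ds - 1))" using AnS_e by blast
    qed
  next
    case (step m)
    show ?case
    proof
      assume d: "ds ! m"
      have m: "m < length ds" "0 < Suc m" "Suc m < length ds" using step.hyps L by auto
      have e: "(vs ! m, vs ! Suc m) \<in> E" using edge[OF m(1)] d by simp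
      have "AnS (vs ! Suc m)"
      proof (cases "ds ! Suc m")
        case True then show ?thesis using step.IH by simp
      next
        case False
        then have "\<exists>z\<in>Z. anc E (vs ! Suc m) z" using int[OF m(2,3)] d by simp
        then show ?thesis using AnS_Z by blast
      qed
      then show "AnS (vs ! m)" using AnS_e e by blast
    qed
  qed
  have bwd: "\<not> ds ! (l - 1) \<longrightarrow> AnS (vs ! l)" if "1 \<le> l" "l \<le> length ds" for l
    using that
  proof (induction l rule: dec_induct)
    case base
    show ?case
    proof
      assume "\<not> ds ! (1 - 1)"
      then have "(vs ! 1, a) \<in> E" using edge[of 0] L v0 by simp
      moreover have "AnS a" using aS unfolding AnS_def anc_def by blast
      ultimately show "AnS (vs ! 1)" using AnS_e by blast
    qed
  next
    case (step m)
    show ?case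
    proof
      assume d: "\<not> ds ! (Suc m - 1)"
      have m: "m < length ds" "0 < m" using step.hyps that(2) by auto
      have e: "(vs ! Suc m, vs ! m) \<in> E" using edge[OF m(1)] d by simp
      have "AnS (vs ! m)"
      proof (cases "ds ! (m - 1)")
        case False then show ?thesis using step.IH m by simp
      next
        case True
        then have "\<exists>z\<in>Z. anc E (vs ! m) z" using int[OF m(2,1)] d by simp
        then show ?thesis using AnS_Z by blast
      qed
      then show "AnS (vs ! Suc m)" using AnS_e e by blast
    qed
  qed
  have coll: "ds ! (l - 1) \<and> \<not> ds ! l" if l: "0 < l" "l < length ds" for l
  proof (rule ccontr)
    assume nc: "\<not> (ds ! (l - 1) \<and> \<not> ds ! l)"
    then have nz: "vs ! l \<notin> Z" using int[OF l] by simp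
    have "AnS (vs ! l)"
    proof (cases "ds ! l")
      case True then show ?thesis using fwd[of l] l by simp
    next
      case False
      then have "\<not> ds ! (l - 1)" using nc by simp
      then show ?thesis using bwd[of l] l by simp
    qed
    moreover have "vs ! l \<noteq> a" using dist l L v0 by (metis less_imp_le_nat not_less_iff_gr_or_eq nth_eq_iff_index_eq diff_less less_one order.strict_trans zero_less_diff)
    moreover have "vs ! l \<noteq> c" using dist l L vl by (metis nth_eq_iff_index_eq less_irrefl_nat diff_less less_one order.strict_trans zero_less_diff)
    ultimately have "vs ! l \<in> Z" using Zfull unfolding AnS_def by blast
    with nz show False by simp
  qed
  have "length ds \<le> 2"
  proof (rule ccontr)
    assume "\<not> length ds \<le> 2"
    then have "\<not> ds ! 1" "ds ! (2 - 1)" using coll[of 1] coll[of 2] by auto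
    then show False by simp
  qed
  moreover have "length ds \<ge> 1" using L by simp
  ultimately consider "length ds = 1" | "length ds = 2" by linarith
  then show ?thesis
  proof cases
    case 1
    then show ?thesis using edge[of 0] v0 vl by (cases "ds ! 0") auto
  next
    case 2
    then have cl: "ds ! 0" "\<not> ds ! 1" using coll[of 1] by auto
    have "(a, vs ! 1) \<in> E" using edge[of 0] cl v0 2 by simp
    moreover have "(c, vs ! 1) \<in> E" using edge[of 1] cl vl 2 by (simp add: numeral_2_eq_2)
    moreover have "\<exists>z\<in>Z. anc E (vs ! 1) z" using int[of 1] cl 2 by simp
    then have "AnS (vs ! 1)" using AnS_Z by blast
    ultimately show ?thesis unfolding AnS_def by blast
  qed
qed

lemma blk_eq:
  assumes "partition_on A P" "C \<in> P" "v \<in> C"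
  shows "blk P v = C"
  unfolding blk_def
proof (rule the_equality)
  show "C \<in> P \<and> v \<in> C" using assms by simp
next
  fix C' assume "C' \<in> P \<and> v \<in> C'"
  then show "C' = C" using assms partition_onD2[OF assms(1)] unfolding disjoint_def by blast
qed

lemma blk_props:
  assumes "partition_on A P" "v \<in> A"
  shows "blk P v \<in> P" "v \<in> blk P v"
proof -
  obtain C where "C \<in> P" "v \<in> C" using assms partition_onD1[OF assms(1)] by blast
  then show "blk P v \<in> P" "v \<in> blk P v" using blk_eq[OF assms(1)] by auto
qed

lemma POPs_D:
  assumes "x \<in> POPs n"
  shows "partition_on {1..n} (fst x)" "partial_order_on (fst x) (snd x)"
  using assms unfolding POPs_def by auto

lemma below_mem:
  assumes "x \<in> POPs n"
  shows "v \<in> below x Cs \<longleftrightarrow> v \<in> {1..n} \<and> (\<exists>C'\<in>Cs. (blk (fst x) v, C') \<in> snd x)"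
proof -
  have part: "partition_on {1..n} (fst x)" using POPs_D[OF assms] by simp
  show ?thesis
  proof
    assume "v \<in> below x Cs"
    then obtain C where C: "C \<in> fst x" "v \<in> C" "\<exists>C'\<in>Cs. (C, C') \<in> snd x"
      unfolding below_def by blast
    have "v \<in> {1..n}" using C partition_onD1[OF part] by blast
    moreover have "blk (fst x) v = C" using blk_eq[OF part C(1,2)] .
    ultimately show "v \<in> {1..n} \<and> (\<exists>C'\<in>Cs. (blk (fst x) v, C') \<in> snd x)" using C by simp
  next
    assume "v \<in> {1..n} \<and> (\<exists>C'\<in>Cs. (blk (fst x) v, C') \<in> snd x)"
    then show "v \<in> below x Cs" using blk_props[OF part] unfolding below_def by blast
  qed
qed

lemma blk_refl:
  assumes "x \<in> POPs n" "v \<in> {1..n}"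
  shows "(blk (fst x) v, blk (fst x) v) \<in> snd x"
proof -
  have "blk (fst x) v \<in> fst x" using blk_props POPs_D[OF assms(1)] assms(2) by blast
  then show ?thesis using partial_order_onD(1)[OF POPs_D(2)[OF assms(1)]] unfolding refl_on_def by blast
qed

lemma anc_in_range:
  assumes "E \<subseteq> {1..n} \<times> {1..n}" "(u, v) \<in> E\<^sup>*" "u \<noteq> v"
  shows "u \<in> {1..n}" "v \<in> {1..n}"
proof -
  from assms(2,3) have "(u, v) \<in> E\<^sup>+" by (simp add: rtrancl_eq_or_trancl)
  then obtain w w' where "(u, w) \<in> E" "(w', v) \<in> E"
    by (metis converse_tranclE tranclE)
  then show "u \<in> {1..n}" "v \<in> {1..n}" using assms(1) by auto
qed

lemma scc_mem: "i \<in> {1..n} \<Longrightarrow> i \<in> scc n E i"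
  unfolding scc_def by auto

lemma scc_eq_iff:
  assumes "i \<in> {1..n}" "j \<in> {1..n}"
  shows "scc n E i = scc n E j \<longleftrightarrow> (i, j) \<in> E\<^sup>* \<and> (j, i) \<in> E\<^sup>*"
proof
  assume "scc n E i = scc n E j"
  then have "j \<in> scc n E i" using scc_mem[OF assms(2)] by simp
  then show "(i, j) \<in> E\<^sup>* \<and> (j, i) \<in> E\<^sup>*" unfolding scc_def by simp
next
  assume "(i, j) \<in> E\<^sup>* \<and> (j, i) \<in> E\<^sup>*"
  then show "scc n E i = scc n E j" unfolding scc_def by (auto intro: rtrancl_trans)
qed

lemma scc_part: "partition_on {1..n} (scc n E ` {1..n})"
proof (rule partition_onI)
  show "\<Union> (scc n E ` {1..n}) = {1..n}" using scc_mem unfolding scc_def by blast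
next
  fix p q assume "p \<in> scc n E ` {1..n}" "q \<in> scc n E ` {1..n}" "p \<noteq> q"
  then obtain i j where ij: "i \<in> {1..n}" "j \<in> {1..n}" "p = scc n E i" "q = scc n E j" by blast
  show "disjnt p q"
  proof (rule ccontr)
    assume "\<not> disjnt p q"
    then obtain k where "k \<in> p" "k \<in> q" unfolding disjnt_def by blast
    then have k: "k \<in> {1..n}" "(i, k) \<in> E\<^sup>*" "(k, i) \<in> E\<^sup>*" "(j, k) \<in> E\<^sup>*" "(k, j) \<in> E\<^sup>*"
      using ij unfolding scc_def by auto
    then have "scc n E i = scc n E k" "scc n E j = scc n E k" using scc_eq_iff ij by blast+
    then show False using ij \<open>p \<noteq> q\<close> by simp
  qed
next
  show "{} \<notin> scc n E ` {1..n}" using scc_mem by blast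
qed

lemma pop_of_fst: "fst (pop_of n E) = scc n E ` {1..n}"
  unfolding pop_of_def Let_def by simp

lemma pop_of_snd: "snd (pop_of n E) = {(C1, C2). C1 \<in> scc n E ` {1..n} \<and> C2 \<in> scc n E ` {1..n} \<and>
          (C1 = C2 \<or> (\<exists>u \<in> C1. \<exists>v \<in> C2. (u, v) \<in> E\<^sup>*))}"
  unfolding pop_of_def Let_def by simp

lemma pop_blk: "v \<in> {1..n} \<Longrightarrow> blk (fst (pop_of n E)) v = scc n E v"
  unfolding pop_of_fst by (rule blk_eq[OF scc_part]) (auto simp: scc_mem)

lemma pop_ord:
  assumes "u \<in> {1..n}" "v \<in> {1..n}"
  shows "(scc n E u, scc n E v) \<in> snd (pop_of n E) \<longleftrightarrow> (u, v) \<in> E\<^sup>*"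
proof
  assume "(scc n E u, scc n E v) \<in> snd (pop_of n E)"
  then have "scc n E u = scc n E v \<or> (\<exists>u' \<in> scc n E u. \<exists>v' \<in> scc n E v. (u', v') \<in> E\<^sup>*)"
    unfolding pop_of_snd by simp
  then show "(u, v) \<in> E\<^sup>*"
  proof
    assume "scc n E u = scc n E v" then show ?thesis using scc_eq_iff assms by blast
  next
    assume "\<exists>u' \<in> scc n E u. \<exists>v' \<in> scc n E v. (u', v') \<in> E\<^sup>*"
    then obtain u' v' where "(u, u') \<in> E\<^sup>*" "(u', v') \<in> E\<^sup>*" "(v', v) \<in> E\<^sup>*"
      unfolding scc_def by blast
    then show ?thesis by (meson rtrancl_trans)
  qed
next
  assume "(u, v) \<in> E\<^sup>*"
  then show "(scc n E u, scc n E v) \<in> snd (pop_of n E)"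
    unfolding pop_of_snd using assms scc_mem by blast
qed

lemma pop_ord_blk:
  assumes "u \<in> {1..n}" "v \<in> {1..n}"
  shows "(blk (fst (pop_of n E)) u, blk (fst (pop_of n E)) v) \<in> snd (pop_of n E) \<longleftrightarrow> anc E u v"
  using pop_ord[OF assms] pop_blk assms unfolding anc_def by simp

lemma pop_in_POPs: "pop_of n E \<in> POPs n"
proof -
  let ?P = "scc n E ` {1..n}"
  let ?R = "snd (pop_of n E)"
  have R: "?R \<subseteq> ?P \<times> ?P" unfolding pop_of_snd by auto
  have refl: "refl_on ?P ?R" using R unfolding refl_on_def pop_of_snd by auto
  have trans: "trans ?R"
  proof (rule transI)
    fix C1 C2 C3 assume a: "(C1, C2) \<in> ?R" "(C2, C3) \<in> ?R"
    then obtain u v w where uvw: "u \<in> {1..n}" "v \<in> {1..n}" "w \<in> {1..n}"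
      "C1 = scc n E u" "C2 = scc n E v" "C3 = scc n E w" using R by blast
    have "(u, v) \<in> E\<^sup>*" using a(1) pop_ord[OF uvw(1,2)] uvw(4,5) by simp
    moreover have "(v, w) \<in> E\<^sup>*" using a(2) pop_ord[OF uvw(2,3)] uvw(5,6) by simp
    ultimately have "(u, w) \<in> E\<^sup>*" by (rule rtrancl_trans)
    then show "(C1, C3) \<in> ?R" using pop_ord[OF uvw(1,3)] uvw(4,6) by simp
  qed
  have antisym: "antisym ?R"
  proof (rule antisymI)
    fix C1 C2 assume a: "(C1, C2) \<in> ?R" "(C2, C1) \<in> ?R"
    then obtain u v where uv: "u \<in> {1..n}" "v \<in> {1..n}"
      "C1 = scc n E u" "C2 = scc n E v" using R by blast
    have "(u, v) \<in> E\<^sup>*" using a(1) pop_ord[OF uv(1,2)] uv(3,4) by simp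
    moreover have "(v, u) \<in> E\<^sup>*" using a(2) pop_ord[OF uv(2,1)] uv(3,4) by simp
    ultimately show "C1 = C2" using scc_eq_iff[OF uv(1,2)] uv(3,4) by simp
  qed
  have "partial_order_on ?P ?R"
    unfolding partial_order_on_def preorder_on_def using R refl trans antisym by blast
  then have "partition_on {1..n} (fst (pop_of n E)) \<and> partial_order_on (fst (pop_of n E)) (snd (pop_of n E))"
    using scc_part pop_of_fst by simp
  then show ?thesis unfolding POPs_def by (cases "pop_of n E") simp
qed

lemma pop_below:
  assumes "E \<subseteq> {1..n} \<times> {1..n}" "\<forall>c\<in>S. c \<in> {1..n}"
  shows "below (pop_of n E) (blk (fst (pop_of n E)) ` S) = {v. \<exists>s\<in>S. anc E v s}"
proof -
  have "v \<in> below (pop_of n E) (blk (fst (pop_of n E)) ` S) \<longleftrightarrow> (\<exists>s\<in>S. anc E v s)" for v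
  proof -
    have "v \<in> below (pop_of n E) (blk (fst (pop_of n E)) ` S) \<longleftrightarrow>
          v \<in> {1..n} \<and> (\<exists>s\<in>S. (blk (fst (pop_of n E)) v, blk (fst (pop_of n E)) s) \<in> snd (pop_of n E))"
      using below_mem[OF pop_in_POPs] by blast
    also have "\<dots> \<longleftrightarrow> v \<in> {1..n} \<and> (\<exists>s\<in>S. anc E v s)"
      using pop_ord_blk assms(2) by blast
    also have "\<dots> \<longleftrightarrow> (\<exists>s\<in>S. anc E v s)"
      using anc_in_range[OF assms(1)] assms(2) unfolding anc_def by blast
    finally show ?thesis .
  qed
  then show ?thesis by blast
qed

definition PA :: "nat \<Rightarrow> (nat \<times> nat) set \<Rightarrow> (nat \<times> nat) set" where
  "PA n E = {(a, b). a \<in> {1..n} \<and> b \<in> {1..n} \<and> padj E a b}"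

lemma padj_sym: "padj E a b \<Longrightarrow> padj E b a"
  unfolding padj_def by blast

lemma padj_neq: "padj E a b \<Longrightarrow> a \<noteq> b"
  unfolding padj_def by blast

lemma anc_refl: "anc E a a"
  unfolding anc_def by simp

lemma chain2:
  assumes "padj E a b"
  shows "\<not> dsep E a b Z"
proof -
  have "\<not> dsep E (hd [a, b]) (last [a, b]) Z"
  proof (rule chain_dconn)
    fix i assume "Suc i < length [a, b]"
    then have "i = 0" by simp
    then show "padj E ([a, b] ! i) ([a, b] ! Suc i)" using assms by simp
  next
    fix i assume "0 < i" "Suc i < length [a, b]"
    then show "[a, b] ! i \<notin> Z" by simp
  next
    fix i assume "i < length [a, b]"
    then have "i = 0 \<or> i = 1" by auto
    then show "AnZ E Z ([a, b] ! i) \<or> anc E ([a, b] ! i) (hd [a, b]) \<or> anc E ([a, b] ! i) (last [a, b])"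
      using anc_refl by auto
  qed (use padj_neq[OF assms] in auto)
  then show ?thesis by simp
qed

lemma chain3:
  assumes "padj E a b" "padj E b c" "a \<noteq> c" "b \<notin> Z"
    and "AnZ E Z b \<or> anc E b a \<or> anc E b c"
  shows "\<not> dsep E a c Z"
proof -
  have "\<not> dsep E (hd [a, b, c]) (last [a, b, c]) Z"
  proof (rule chain_dconn)
    fix i assume "Suc i < length [a, b, c]"
    then have "i = 0 \<or> i = 1" by auto
    then show "padj E ([a, b, c] ! i) ([a, b, c] ! Suc i)" using assms by auto
  next
    fix i assume "0 < i" "Suc i < length [a, b, c]"
    then have "i = 1" by auto
    then show "[a, b, c] ! i \<notin> Z" using assms by simp
  next
    fix i assume "i < length [a, b, c]"
    then have "i = 0 \<or> i = 1 \<or> i = 2" by auto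
    then show "AnZ E Z ([a, b, c] ! i) \<or> anc E ([a, b, c] ! i) (hd [a, b, c]) \<or> anc E ([a, b, c] ! i) (last [a, b, c])"
      using anc_refl assms(5) by auto
  qed (use assms in auto)
  then show ?thesis by simp
qed

lemma E1_sup:
  assumes "x \<in> POPs n"
  shows "PA n E \<subseteq> E1 n E x"
proof
  fix p assume "p \<in> PA n E"
  then obtain a b where p: "p = (a, b)" "a \<in> {1..n}" "b \<in> {1..n}" "padj E a b"
    unfolding PA_def by blast
  then show "p \<in> E1 n E x" unfolding E1_def using chain2[OF p(4)] padj_neq[OF p(4)] by blast
qed

lemma E1_sub_range: "E1 n E x \<subseteq> {1..n} \<times> {1..n}"
  unfolding E1_def by auto

lemma E1_tp:
  assumes E: "E \<subseteq> {1..n} \<times> {1..n}"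
  shows "E1 n E (pop_of n E) = PA n E"
proof
  show "PA n E \<subseteq> E1 n E (pop_of n E)" using E1_sup[OF pop_in_POPs] .
next
  show "E1 n E (pop_of n E) \<subseteq> PA n E"
  proof
    fix p assume "p \<in> E1 n E (pop_of n E)"
    then obtain a b where p: "p = (a, b)" "a \<in> {1..n}" "b \<in> {1..n}" "a \<noteq> b"
      and nd: "\<not> dsep E a b (below (pop_of n E) {blk (fst (pop_of n E)) a, blk (fst (pop_of n E)) b} - {a, b})"
      unfolding E1_def by blast
    have bel: "below (pop_of n E) {blk (fst (pop_of n E)) a, blk (fst (pop_of n E)) b} = {v. \<exists>s\<in>{a, b}. anc E v s}"
      using pop_below[OF E, of "{a, b}"] p by simp
    obtain vs ds where path: "dconn_path E ({v. \<exists>s\<in>{a, b}. anc E v s} - {a, b}) vs ds" "hd vs = a" "last vs = b"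
      using nd unfolding dsep_def bel by blast
    have "(a, b) \<in> E \<or> (b, a) \<in> E \<or> (\<exists>d. (a, d) \<in> E \<and> (b, d) \<in> E \<and> (\<exists>s\<in>{a, b}. anc E d s))"
      by (rule path_ancestral[OF path, of "{a, b}"]) auto
    then have "padj E a b" unfolding padj_def using p(4) by blast
    then show "p \<in> PA n E" unfolding PA_def using p by blast
  qed
qed

lemma E1_mem: "(a, b) \<in> E1 n E x \<longleftrightarrow> a \<in> {1..n} \<and> b \<in> {1..n} \<and> a \<noteq> b \<and>
     \<not> dsep E a b (below x {blk (fst x) a, blk (fst x) b} - {a, b})"
  unfolding E1_def by simp

lemma E2_mem: "(a, b, c) \<in> E2 n E x \<longleftrightarrow> a \<noteq> b \<and> a \<noteq> c \<and> b \<noteq> c \<and>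
     (a, b) \<in> E1 n E x \<and> (c, b) \<in> E1 n E x \<and> (a, c) \<notin> E1 n E x \<and>
     ((blk (fst x) b, blk (fst x) a) \<in> snd x \<or> (blk (fst x) b, blk (fst x) c) \<in> snd x)"
  unfolding E2_def by simp

lemma E3_mem: "(a, b, c) \<in> E3 n E x \<longleftrightarrow> a \<noteq> b \<and> a \<noteq> c \<and> b \<noteq> c \<and>
     (a, b) \<in> E1 n E x \<and> (c, b) \<in> E1 n E x \<and> (a, c) \<notin> E1 n E x \<and>
     \<not> dsep E a c (below x {blk (fst x) a, blk (fst x) b, blk (fst x) c} - {a, c})"
  unfolding E3_def by simp

lemma E4_mem: "((a, b1, c), (a', b2, c')) \<in> E4 n E x \<longleftrightarrow> a' = a \<and> c' = c \<and>
     a \<noteq> b1 \<and> a \<noteq> c \<and> b1 \<noteq> c \<and> a \<noteq> b2 \<and> b2 \<noteq> c \<and>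
     (a, b1) \<in> E1 n E x \<and> (c, b1) \<in> E1 n E x \<and>
     (a, b2) \<in> E1 n E x \<and> (c, b2) \<in> E1 n E x \<and> (a, c) \<notin> E1 n E x \<and>
     (a, b1, c) \<notin> E2 n E x \<union> E3 n E x \<and> (a, b2, c) \<notin> E2 n E x \<union> E3 n E x \<and>
     (blk (fst x) b1, blk (fst x) b2) \<in> snd x"
  unfolding E4_def by simp

lemma argmin_sub:
  assumes x0: "x0 \<in> X" and sub: "\<And>x. x \<in> X \<Longrightarrow> g x0 \<subseteq> g x" and fin: "\<And>x. x \<in> X \<Longrightarrow> finite (g x)"
  shows "argmin_on X (\<lambda>x. card (g x)) = {x \<in> X. g x = g x0}"
proof (intro set_eqI iffI)
  fix x assume "x \<in> argmin_on X (\<lambda>x. card (g x))"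
  then have x: "x \<in> X" "card (g x) \<le> card (g x0)" using x0 unfolding argmin_on_def by auto
  have "g x0 = g x" by (rule card_subset_eq[OF fin[OF x(1)] sub[OF x(1)]]) (use x card_mono[OF fin[OF x(1)] sub[OF x(1)]] in simp)
  then show "x \<in> {x \<in> X. g x = g x0}" using x by simp
next
  fix x assume a: "x \<in> {x \<in> X. g x = g x0}"
  have "card (g x) \<le> card (g y)" if "y \<in> X" for y
    using a card_mono[OF fin[OF that] sub[OF that]] by simp
  then show "x \<in> argmin_on X (\<lambda>x. card (g x))" using a unfolding argmin_on_def by simp
qed

lemma argmax_sub:
  assumes x0: "x0 \<in> X" and sub: "\<And>x. x \<in> X \<Longrightarrow> g x \<subseteq> g x0" and fin: "finite (g x0)"
  shows "argmax_on X (\<lambda>x. card (g x)) = {x \<in> X. g x = g x0}"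
proof (intro set_eqI iffI)
  fix x assume "x \<in> argmax_on X (\<lambda>x. card (g x))"
  then have x: "x \<in> X" "card (g x0) \<le> card (g x)" using x0 unfolding argmax_on_def by auto
  have "g x = g x0" by (rule card_subset_eq[OF fin sub[OF x(1)]]) (use x card_mono[OF fin sub[OF x(1)]] in simp)
  then show "x \<in> {x \<in> X. g x = g x0}" using x by simp
next
  fix x assume a: "x \<in> {x \<in> X. g x = g x0}"
  have "card (g y) \<le> card (g x)" if "y \<in> X" for y
    using a card_mono[OF fin sub[OF that]] by simp
  then show "x \<in> argmax_on X (\<lambda>x. card (g x))" using a unfolding argmax_on_def by simp
qed

lemma E1_finite: "finite (E1 n E x)"
  by (rule finite_subset[OF E1_sub_range]) simp

lemma S1_char:
  assumes E: "E \<subseteq> {1..n} \<times> {1..n}"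
  shows "S1 n E = {x \<in> POPs n. E1 n E x = PA n E}"
proof -
  have "S1 n E = {x \<in> POPs n. E1 n E x = E1 n E (pop_of n E)}"
    unfolding S1_def
  proof (rule argmin_sub)
    show "pop_of n E \<in> POPs n" by (rule pop_in_POPs)
    fix x assume "x \<in> POPs n"
    show "E1 n E (pop_of n E) \<subseteq> E1 n E x" unfolding E1_tp[OF E] by (rule E1_sup) fact
    show "finite (E1 n E x)" by (rule E1_finite)
  qed
  then show ?thesis unfolding E1_tp[OF E] .
qed

lemma PA_range: "(a, b) \<in> PA n E \<Longrightarrow> a \<in> {1..n} \<and> b \<in> {1..n} \<and> padj E a b"
  unfolding PA_def by simp

lemma E2_tp_sub:
  assumes E: "E \<subseteq> {1..n} \<times> {1..n}" and x: "x \<in> POPs n" and x1: "E1 n E x = PA n E"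
  shows "E2 n E (pop_of n E) \<subseteq> E2 n E x"
proof
  fix p assume pin: "p \<in> E2 n E (pop_of n E)"
  obtain a b c where p: "p = (a, b, c)" by (cases p) auto
  have pin': "(a, b, c) \<in> E2 n E (pop_of n E)" using pin p by simp
  note h0 = pin'[unfolded E2_mem E1_tp[OF E]]
  have h: "a \<noteq> b" "a \<noteq> c" "b \<noteq> c"
    "(a, b) \<in> PA n E" "(c, b) \<in> PA n E" "(a, c) \<notin> PA n E"
    using h0 by simp_all
  have o: "(blk (fst (pop_of n E)) b, blk (fst (pop_of n E)) a) \<in> snd (pop_of n E) \<or>
            (blk (fst (pop_of n E)) b, blk (fst (pop_of n E)) c) \<in> snd (pop_of n E)"
    using h0 by simp
  have r: "a \<in> {1..n}" "b \<in> {1..n}" "c \<in> {1..n}" "padj E a b" "padj E c b"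
    using PA_range[OF h(4)] PA_range[OF h(5)] by simp_all
  have ab: "anc E b a \<or> anc E b c" using o pop_ord_blk[OF r(2,1)] pop_ord_blk[OF r(2,3)] by simp
  show "p \<in> E2 n E x"
  proof (rule ccontr)
    assume "p \<notin> E2 n E x"
    then have "(a, b, c) \<notin> E2 n E x" using p by simp
    then have no: "\<not> ((blk (fst x) b, blk (fst x) a) \<in> snd x \<or> (blk (fst x) b, blk (fst x) c) \<in> snd x)"
      using h x1 unfolding E2_mem by simp
    define Z where "Z = below x {blk (fst x) a, blk (fst x) c} - {a, c}"
    have "b \<notin> below x {blk (fst x) a, blk (fst x) c}" using no below_mem[OF x, of b] by simp
    then have bZ: "b \<notin> Z" unfolding Z_def by simp
    have "(a, c) \<notin> E1 n E x" using h(6) x1 by simp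
    then have "dsep E a c Z" using r h(2) unfolding E1_mem Z_def by simp
    moreover have "\<not> dsep E a c Z"
      using chain3[OF r(4) padj_sym[OF r(5)] h(2) bZ] ab by blast
    ultimately show False by simp
  qed
qed

lemma E2_range: "E2 n E x \<subseteq> {1..n} \<times> {1..n} \<times> {1..n}"
  unfolding E2_def E1_def by auto

lemma E3_range: "E3 n E x \<subseteq> {1..n} \<times> {1..n} \<times> {1..n}"
  unfolding E3_def E1_def by auto

lemma E4_range: "E4 n E x \<subseteq> ({1..n} \<times> {1..n} \<times> {1..n}) \<times> ({1..n} \<times> {1..n} \<times> {1..n})"
  unfolding E4_def E1_def by auto

lemma S2_char:
  assumes E: "E \<subseteq> {1..n} \<times> {1..n}"
  shows "S2 n E = {x \<in> S1 n E. E2 n E x = E2 n E (pop_of n E)}"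
  unfolding S2_def
proof (rule argmin_sub)
  show "pop_of n E \<in> S1 n E" using S1_char[OF E] pop_in_POPs E1_tp[OF E] by simp
  show "\<And>x. x \<in> S1 n E \<Longrightarrow> E2 n E (pop_of n E) \<subseteq> E2 n E x"
    using E2_tp_sub[OF E] S1_char[OF E] by blast
  show "\<And>x. x \<in> S1 n E \<Longrightarrow> finite (E2 n E x)" by (rule finite_subset[OF E2_range]) simp
qed

lemma S1_D: "E \<subseteq> {1..n} \<times> {1..n} \<Longrightarrow> x \<in> S1 n E \<Longrightarrow> x \<in> POPs n \<and> E1 n E x = PA n E"
  using S1_char by blast

lemma tp_S1: "E \<subseteq> {1..n} \<times> {1..n} \<Longrightarrow> pop_of n E \<in> S1 n E"
  using S1_char pop_in_POPs E1_tp by blast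

lemma tp_S2: "E \<subseteq> {1..n} \<times> {1..n} \<Longrightarrow> pop_of n E \<in> S2 n E"
  using S2_char tp_S1 by blast

lemma blk3: "{blk P a, blk P b, blk P c} = blk P ` {a, b, c}" by simp
lemma blk2: "{blk P a, blk P c} = blk P ` {a, c}" by simp

lemma E3_tp_sub:
  assumes E: "E \<subseteq> {1..n} \<times> {1..n}" and x: "x \<in> POPs n" and x1: "E1 n E x = PA n E"
  shows "E3 n E (pop_of n E) \<subseteq> E3 n E x"
proof
  fix p assume pin: "p \<in> E3 n E (pop_of n E)"
  obtain a b c where p: "p = (a, b, c)" by (cases p) auto
  have pin': "(a, b, c) \<in> E3 n E (pop_of n E)" using pin p by simp
  note h0 = pin'[unfolded E3_mem E1_tp[OF E]]
  have h: "a \<noteq> b" "a \<noteq> c" "b \<noteq> c"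
    "(a, b) \<in> PA n E" "(c, b) \<in> PA n E" "(a, c) \<notin> PA n E"
    using h0 by simp_all
  have r: "a \<in> {1..n}" "b \<in> {1..n}" "c \<in> {1..n}"
    using PA_range[OF h(4)] PA_range[OF h(5)] by simp_all
  have npj: "\<not> padj E a c" using h(6) r unfolding PA_def by simp
  have nd: "\<not> dsep E a c (below (pop_of n E) {blk (fst (pop_of n E)) a, blk (fst (pop_of n E)) b, blk (fst (pop_of n E)) c} - {a, c})"
    using h0 by simp
  have bel: "below (pop_of n E) {blk (fst (pop_of n E)) a, blk (fst (pop_of n E)) b, blk (fst (pop_of n E)) c}
      = {v. \<exists>s\<in>{a, b, c}. anc E v s}"
    unfolding blk3 by (rule pop_below[OF E]) (use r in simp)
  obtain vs ds where path: "dconn_path E ({v. \<exists>s\<in>{a, b, c}. anc E v s} - {a, c}) vs ds" "hd vs = a" "last vs = c"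
    using nd unfolding dsep_def bel by blast
  have "(a, c) \<in> E \<or> (c, a) \<in> E \<or> (\<exists>d. (a, d) \<in> E \<and> (c, d) \<in> E \<and> (\<exists>s\<in>{a, b, c}. anc E d s))"
    by (rule path_ancestral[OF path, of "{a, b, c}"]) auto
  then obtain d where d: "(a, d) \<in> E" "(c, d) \<in> E" "anc E d b"
    using npj h(2) unfolding padj_def by blast
  define Z where "Z = below x {blk (fst x) a, blk (fst x) b, blk (fst x) c} - {a, c}"
  have "b \<in> below x {blk (fst x) a, blk (fst x) b, blk (fst x) c}"
    using below_mem[OF x, of b] r blk_refl[OF x r(2)] by simp
  then have bZ: "b \<in> Z" unfolding Z_def using h by simp
  have "bb E Z a d True" using d(1) by (rule bb.st_out)
  then have "bb E Z a c False" using bb.ext_in_c d(2) d(3) bZ by blast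
  then have "\<not> dsep E a c Z" using bb_dconn h(2) by blast
  then show "p \<in> E3 n E x" unfolding p E3_mem x1 Z_def using h by simp
qed

lemma S3_char:
  assumes E: "E \<subseteq> {1..n} \<times> {1..n}"
  shows "S3 n E = {x \<in> S2 n E. E3 n E x = E3 n E (pop_of n E)}"
  unfolding S3_def
proof (rule argmin_sub)
  show "pop_of n E \<in> S2 n E" using tp_S2[OF E] .
  fix x assume "x \<in> S2 n E"
  then have "x \<in> S1 n E" using S2_char[OF E] by blast
  then have "x \<in> POPs n" "E1 n E x = PA n E" using S1_D[OF E] by blast+
  then show "E3 n E (pop_of n E) \<subseteq> E3 n E x" using E3_tp_sub[OF E] by blast
  show "finite (E3 n E x)" by (rule finite_subset[OF E3_range]) simp
qed

lemma tp_S3: "E \<subseteq> {1..n} \<times> {1..n} \<Longrightarrow> pop_of n E \<in> S3 n E"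
  using S3_char tp_S2 by blast

lemma S3_D:
  assumes E: "E \<subseteq> {1..n} \<times> {1..n}" and "x \<in> S3 n E"
  shows "x \<in> POPs n" "E1 n E x = PA n E" "E2 n E x = E2 n E (pop_of n E)" "E3 n E x = E3 n E (pop_of n E)"
  using assms S1_D[OF E] S2_char[OF E] S3_char[OF E] by blast+

lemma E4_tp_sub:
  assumes E: "E \<subseteq> {1..n} \<times> {1..n}" and x: "x \<in> POPs n" and x1: "E1 n E x = PA n E"
    and x2: "E2 n E x = E2 n E (pop_of n E)" and x3: "E3 n E x = E3 n E (pop_of n E)"
  shows "E4 n E (pop_of n E) \<subseteq> E4 n E x"
proof
  fix p assume pin: "p \<in> E4 n E (pop_of n E)"
  obtain a b1 c a' b2 c' where p: "p = ((a, b1, c), (a', b2, c'))" by (cases p) auto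
  have pin': "((a, b1, c), (a', b2, c')) \<in> E4 n E (pop_of n E)" using pin p by simp
  note h0 = pin'[unfolded E4_mem E1_tp[OF E]]
  have h: "a' = a" "c' = c" "a \<noteq> b1" "a \<noteq> c" "b1 \<noteq> c" "a \<noteq> b2" "b2 \<noteq> c"
     "(a, b1) \<in> PA n E" "(c, b1) \<in> PA n E" "(a, b2) \<in> PA n E" "(c, b2) \<in> PA n E" "(a, c) \<notin> PA n E"
     "(a, b1, c) \<notin> E2 n E (pop_of n E) \<union> E3 n E (pop_of n E)"
     "(a, b2, c) \<notin> E2 n E (pop_of n E) \<union> E3 n E (pop_of n E)"
    using h0 by simp_all
  have o: "(blk (fst (pop_of n E)) b1, blk (fst (pop_of n E)) b2) \<in> snd (pop_of n E)" using h0 by simp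
  have r: "a \<in> {1..n}" "b1 \<in> {1..n}" "c \<in> {1..n}" "b2 \<in> {1..n}" "padj E a b1" "padj E c b1"
    using PA_range[OF h(8)] PA_range[OF h(9)] PA_range[OF h(10)] by simp_all
  have anc12: "anc E b1 b2" using o pop_ord_blk[OF r(2,4)] by simp
  have ox: "(blk (fst x) b1, blk (fst x) b2) \<in> snd x"
  proof (rule ccontr)
    assume no12: "\<not> ?thesis"
    have n2: "(a, b1, c) \<notin> E2 n E x" using h(13) x2 by simp
    then have no: "\<not> ((blk (fst x) b1, blk (fst x) a) \<in> snd x \<or> (blk (fst x) b1, blk (fst x) c) \<in> snd x)"
      using h x1 unfolding E2_mem by simp
    have n3: "(a, b2, c) \<notin> E3 n E x" using h(14) x3 by simp
    define Z where "Z = below x {blk (fst x) a, blk (fst x) b2, blk (fst x) c} - {a, c}"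
    have "dsep E a c Z" using n3 h x1 unfolding E3_mem Z_def by simp
    moreover
    have "b1 \<notin> below x {blk (fst x) a, blk (fst x) b2, blk (fst x) c}"
      using no no12 below_mem[OF x, of b1] by simp
    then have b1Z: "b1 \<notin> Z" unfolding Z_def by simp
    have "b2 \<in> below x {blk (fst x) a, blk (fst x) b2, blk (fst x) c}"
      using below_mem[OF x, of b2] r blk_refl[OF x r(4)] by simp
    then have b2Z: "b2 \<in> Z" unfolding Z_def using h by simp
    have "AnZ E Z b1" unfolding AnZ_def using b2Z anc12 by blast
    then have "\<not> dsep E a c Z" using chain3[OF r(5) padj_sym[OF r(6)] h(4) b1Z] by blast
    ultimately show False by simp
  qed
  show "p \<in> E4 n E x" unfolding p E4_mem x1 x2 x3 using h ox by simp
qed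

lemma S4_char:
  assumes E: "E \<subseteq> {1..n} \<times> {1..n}"
  shows "S4 n E = {x \<in> S3 n E. E4 n E x = E4 n E (pop_of n E)}"
  unfolding S4_def
proof (rule argmin_sub)
  show "pop_of n E \<in> S3 n E" using tp_S3[OF E] .
  fix x assume "x \<in> S3 n E"
  then show "E4 n E (pop_of n E) \<subseteq> E4 n E x" using E4_tp_sub[OF E] S3_D[OF E] by blast
  show "finite (E4 n E x)" by (rule finite_subset[OF E4_range]) simp
qed

lemma tp_S4: "E \<subseteq> {1..n} \<times> {1..n} \<Longrightarrow> pop_of n E \<in> S4 n E"
  using S4_char tp_S3 by blast

lemma S4_D:
  assumes E: "E \<subseteq> {1..n} \<times> {1..n}" and "x \<in> S4 n E"
  shows "x \<in> POPs n" "E1 n E x = PA n E" "E2 n E x = E2 n E (pop_of n E)"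
  using assms S4_char[OF E] S3_D[OF E] by blast+

lemma Dt_mem: "as \<in> Dt n E t x \<longleftrightarrow> length as = t + 2 \<and> set as \<subseteq> {1..n} \<and> distinct as \<and>
     (\<forall>i \<le> t. (as ! i, as ! (i + 1)) \<in> E1 n E x) \<and>
     (\<forall>i \<in> {2..t+1}. \<forall>j. j + 2 \<le> i \<longrightarrow> (as ! i, as ! j) \<notin> E1 n E x) \<and>
     (\<forall>i \<in> {1..t}. blk (fst x) (as ! i) = blk (fst x) (as ! 1)) \<and>
     \<not> ((blk (fst x) (as ! 1), blk (fst x) (as ! 0)) \<in> snd x \<or>
        (blk (fst x) (as ! 1), blk (fst x) (as ! (t + 1))) \<in> snd x)"
  unfolding Dt_def by simp

lemma padj_range:
  assumes E: "E \<subseteq> {1..n} \<times> {1..n}" and "padj E a b"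
  shows "a \<in> {1..n}" "b \<in> {1..n}"
  using assms unfolding padj_def by auto

lemma PA_iff:
  assumes E: "E \<subseteq> {1..n} \<times> {1..n}"
  shows "(a, b) \<in> PA n E \<longleftrightarrow> padj E a b"
  using padj_range[OF E] unfolding PA_def by blast

lemma Dt_finite: "finite (Dt n E t x)"
proof (rule finite_subset)
  show "Dt n E t x \<subseteq> {xs. set xs \<subseteq> {1..n} \<and> length xs = t + 2}" unfolding Dt_def by auto
  show "finite {xs. set xs \<subseteq> {1..n} \<and> length xs = t + 2}" by (rule finite_lists_length_eq) simp
qed

lemma anc_trans: "anc E a b \<Longrightarrow> anc E b c \<Longrightarrow> anc E a c"
  unfolding anc_def by (rule rtrancl_trans)

lemma chain_fwd:
  assumes "\<forall>k \<in> {1..t-1}. anc E (as ! k) (as ! (k + 1))" "1 \<le> i" "i \<le> t"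
  shows "anc E (as ! 1) (as ! i)"
  using assms(2,3)
proof (induction i rule: dec_induct)
  case base show ?case by (rule anc_refl)
next
  case (step m)
  then have "anc E (as ! m) (as ! (m + 1))" using assms(1) by simp
  then show ?case using step anc_trans by simp
qed

lemma chain_bwd:
  assumes "\<forall>k \<in> {2..t}. anc E (as ! k) (as ! (k - 1))" "1 \<le> i" "i \<le> t"
  shows "anc E (as ! i) (as ! 1)"
  using assms(2,3)
proof (induction i rule: dec_induct)
  case base show ?case by (rule anc_refl)
next
  case (step m)
  then have "Suc m \<in> {2..t}" by auto
  then have "anc E (as ! Suc m) (as ! (Suc m - 1))" using assms(1) by blast
  then have "anc E (as ! Suc m) (as ! m)" by simp
  then show ?case using step anc_trans by simp
qed

lemma mutex_range:
  assumes E: "E \<subseteq> {1..n} \<times> {1..n}" and m: "mutex E t as"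
  shows "set as \<subseteq> {1..n}"
proof
  fix v assume "v \<in> set as"
  then obtain i where i: "i < length as" "as ! i = v" by (auto simp: in_set_conv_nth)
  have mm: "t \<ge> 1" "length as = t + 2" "\<forall>i \<in> {1..t+1}. padj E (as ! i) (as ! (i - 1))"
    using m unfolding mutex_def by auto
  show "v \<in> {1..n}"
  proof (cases "i = 0")
    case True
    have "(1::nat) \<in> {1..t+1}" by simp
    then have "padj E (as ! 1) (as ! (1 - 1))" using mm(3) by blast
    then have "padj E (as ! 1) (as ! 0)" by simp
    then show ?thesis using padj_range[OF E] i True by blast
  next
    case False
    have "i \<in> {1..t+1}" using i False mm by auto
    then have "padj E (as ! i) (as ! (i - 1))" using mm(3) by blast
    then show ?thesis using padj_range[OF E] i by blast
  qed
qed

lemma Dt_tp: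
  assumes E: "E \<subseteq> {1..n} \<times> {1..n}" and t: "t \<ge> 1"
  shows "Dt n E t (pop_of n E) = {as. mutex E t as}"
proof (intro set_eqI iffI)
  fix as assume "as \<in> Dt n E t (pop_of n E)"
  note d = this[unfolded Dt_mem E1_tp[OF E]]
  have len: "length as = t + 2" and rng: "set as \<subseteq> {1..n}" and dist: "distinct as"
    and pth: "\<forall>i \<le> t. (as ! i, as ! (i + 1)) \<in> PA n E"
    and chl: "\<forall>i \<in> {2..t+1}. \<forall>j. j + 2 \<le> i \<longrightarrow> (as ! i, as ! j) \<notin> PA n E"
    and bl: "\<forall>i \<in> {1..t}. blk (fst (pop_of n E)) (as ! i) = blk (fst (pop_of n E)) (as ! 1)"
    and o: "\<not> ((blk (fst (pop_of n E)) (as ! 1), blk (fst (pop_of n E)) (as ! 0)) \<in> snd (pop_of n E) \<or>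
        (blk (fst (pop_of n E)) (as ! 1), blk (fst (pop_of n E)) (as ! (t + 1))) \<in> snd (pop_of n E))"
    using d by blast+
  have inr: "as ! i \<in> {1..n}" if "i < t + 2" for i using rng len that by (metis nth_mem subsetD)
  have sc: "anc E (as ! i) (as ! 1) \<and> anc E (as ! 1) (as ! i)" if "i \<in> {1..t}" for i
  proof -
    have ii: "i < t + 2" "1 < t + 2" using that t by auto
    have "blk (fst (pop_of n E)) (as ! i) = blk (fst (pop_of n E)) (as ! 1)" using bl that by blast
    then have "scc n E (as ! i) = scc n E (as ! 1)" using pop_blk inr[OF ii(1)] inr[OF ii(2)] by simp
    then show ?thesis using scc_eq_iff[OF inr[OF ii(1)] inr[OF ii(2)]] unfolding anc_def by simp
  qed
  show "as \<in> {as. mutex E t as}" unfolding mem_Collect_eq mutex_def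
  proof (intro conjI ballI allI impI)
    show "1 \<le> t" "length as = t + 2" "distinct as" using t len dist by auto
  next
    fix i assume i: "i \<in> {1..t+1}"
    then have "i - 1 \<le> t" "i - 1 + 1 = i" by auto
    then have "(as ! (i - 1), as ! i) \<in> PA n E" using pth by metis
    then have "padj E (as ! (i - 1)) (as ! i)" using i PA_iff[OF E] by simp
    then show "padj E (as ! i) (as ! (i - 1))" by (rule padj_sym)
  next
    fix i j assume "i \<in> {2..t+1}" "j + 2 \<le> i"
    then show "\<not> padj E (as ! i) (as ! j)" using chl PA_iff[OF E] by blast
  next
    fix i assume i: "i \<in> {1..t-1}"
    then have "anc E (as ! i) (as ! 1)" "anc E (as ! 1) (as ! (i + 1))" using sc by auto
    then show "anc E (as ! i) (as ! (i + 1))" using anc_trans by blast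
  next
    fix i assume i: "i \<in> {2..t}"
    then have "i - 1 \<in> {1..t}" "i \<in> {1..t}" by auto
    then have "anc E (as ! i) (as ! 1)" "anc E (as ! 1) (as ! (i - 1))" using sc by blast+
    then show "anc E (as ! i) (as ! (i - 1))" using anc_trans by blast
  next
    show "\<not> anc E (as ! 1) (as ! 0)" "\<not> anc E (as ! 1) (as ! (t + 1))"
      using o pop_ord_blk inr by auto
  qed
next
  fix as assume "as \<in> {as. mutex E t as}"
  then have m: "mutex E t as" by simp
  have len: "length as = t + 2" and dist: "distinct as"
    and pj: "\<forall>i \<in> {1..t+1}. padj E (as ! i) (as ! (i - 1))"
    and chl: "\<forall>i \<in> {2..t+1}. \<forall>j. j + 2 \<le> i \<longrightarrow> \<not> padj E (as ! i) (as ! j)"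
    and af: "\<forall>i \<in> {1..t-1}. anc E (as ! i) (as ! (i + 1))"
    and ab: "\<forall>i \<in> {2..t}. anc E (as ! i) (as ! (i - 1))"
    and n0: "\<not> anc E (as ! 1) (as ! 0)" and nt: "\<not> anc E (as ! 1) (as ! (t + 1))"
    using m unfolding mutex_def by blast+
  have rng: "set as \<subseteq> {1..n}" by (rule mutex_range[OF E m])
  have inr: "as ! i \<in> {1..n}" if "i < t + 2" for i using rng len that by (metis nth_mem subsetD)
  show "as \<in> Dt n E t (pop_of n E)" unfolding Dt_mem E1_tp[OF E]
  proof (intro conjI ballI allI impI)
    show "length as = t + 2" "set as \<subseteq> {1..n}" "distinct as" using len rng dist by auto
  next
    fix i assume i: "i \<le> t"
    then have "i + 1 \<in> {1..t+1}" by simp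
    then have "padj E (as ! (i + 1)) (as ! (i + 1 - 1))" using pj by blast
    then have "padj E (as ! (i + 1)) (as ! i)" by simp
    then show "(as ! i, as ! (i + 1)) \<in> PA n E" using PA_iff[OF E] padj_sym by blast
  next
    fix i j assume "i \<in> {2..t+1}" "j + 2 \<le> i"
    then show "(as ! i, as ! j) \<notin> PA n E" using chl PA_iff[OF E] by blast
  next
    fix i assume i: "i \<in> {1..t}"
    have "anc E (as ! 1) (as ! i)" using chain_fwd[OF af] i by simp
    moreover have "anc E (as ! i) (as ! 1)" using chain_bwd[OF ab] i by simp
    ultimately have "scc n E (as ! i) = scc n E (as ! 1)"
      using scc_eq_iff inr i t unfolding anc_def by simp
    then show "blk (fst (pop_of n E)) (as ! i) = blk (fst (pop_of n E)) (as ! 1)"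
      using pop_blk inr i t by simp
  next
    have "1 < t + 2" "0 < t + 2" "t + 1 < t + 2" by auto
    then show "\<not> ((blk (fst (pop_of n E)) (as ! 1), blk (fst (pop_of n E)) (as ! 0)) \<in> snd (pop_of n E) \<or>
        (blk (fst (pop_of n E)) (as ! 1), blk (fst (pop_of n E)) (as ! (t + 1))) \<in> snd (pop_of n E))"
      using pop_ord_blk inr n0 nt by simp
  qed
qed

lemma D1_aux:
  assumes E: "E \<subseteq> {1..n} \<times> {1..n}"
    and y1: "E1 n E y = PA n E" and z1: "E1 n E z = PA n E" and yz: "E2 n E y = E2 n E z"
    and asD: "as \<in> Dt n E 1 y"
  shows "as \<in> Dt n E 1 z"
proof -
  note d = asD[unfolded Dt_mem y1]
  have len: "length as = 3" and rng: "set as \<subseteq> {1..n}" and dist: "distinct as"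
    and pth: "\<forall>i \<le> 1. (as ! i, as ! (i + 1)) \<in> PA n E"
    and chl: "\<forall>i \<in> {2..1+1}. \<forall>j. j + 2 \<le> i \<longrightarrow> (as ! i, as ! j) \<notin> PA n E"
    and o: "\<not> ((blk (fst y) (as ! 1), blk (fst y) (as ! 0)) \<in> snd y \<or>
        (blk (fst y) (as ! 1), blk (fst y) (as ! (1 + 1))) \<in> snd y)"
    using d by auto
  define a where "a = as ! 0"
  define b where "b = as ! 1"
  define c where "c = as ! 2"
  have ab: "(a, b) \<in> PA n E" using pth unfolding a_def b_def by (metis le_refl zero_le_one add_0 one_add_one less_one)
  have bc: "(b, c) \<in> PA n E" using pth unfolding b_def c_def by (metis le_refl one_add_one)
  have "(2::nat) \<in> {2..1+1}" by simp
  then have ca: "(c, a) \<notin> PA n E" using chl unfolding c_def a_def by fastforce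
  have cb: "(c, b) \<in> PA n E" using bc PA_iff[OF E] padj_sym by blast
  have ac: "(a, c) \<notin> PA n E" using ca PA_iff[OF E] padj_sym by blast
  have dd: "a \<noteq> b" "a \<noteq> c" "b \<noteq> c" using dist len unfolding a_def b_def c_def
    by (simp_all add: nth_eq_iff_index_eq)
  have oy: "\<not> ((blk (fst y) b, blk (fst y) a) \<in> snd y \<or> (blk (fst y) b, blk (fst y) c) \<in> snd y)"
    using o unfolding a_def b_def c_def by (simp add: numeral_2_eq_2)
  have "(a, b, c) \<notin> E2 n E y" using oy unfolding E2_mem by simp
  then have "(a, b, c) \<notin> E2 n E z" using yz by simp
  then have oz: "\<not> ((blk (fst z) b, blk (fst z) a) \<in> snd z \<or> (blk (fst z) b, blk (fst z) c) \<in> snd z)"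
    using dd ab cb ac z1 unfolding E2_mem by simp
  show ?thesis unfolding Dt_mem z1
  proof (intro conjI)
    show "length as = 1 + 2" "set as \<subseteq> {1..n}" "distinct as" using len rng dist by auto
    show "\<forall>i\<le>1. (as ! i, as ! (i + 1)) \<in> PA n E" using pth by blast
    show "\<forall>i\<in>{2..1 + 1}. \<forall>j. j + 2 \<le> i \<longrightarrow> (as ! i, as ! j) \<notin> PA n E" using chl by blast
    show "\<forall>i\<in>{1..1}. blk (fst z) (as ! i) = blk (fst z) (as ! 1)" by simp
    show "\<not> ((blk (fst z) (as ! 1), blk (fst z) (as ! 0)) \<in> snd z \<or>
        (blk (fst z) (as ! 1), blk (fst z) (as ! (1 + 1))) \<in> snd z)"
      using oz unfolding a_def b_def c_def by (simp add: numeral_2_eq_2)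
  qed
qed

lemma D1_eq:
  assumes E: "E \<subseteq> {1..n} \<times> {1..n}"
    and x1: "E1 n E x = PA n E" and x2: "E2 n E x = E2 n E (pop_of n E)"
  shows "Dt n E 1 x = Dt n E 1 (pop_of n E)"
  using D1_aux[OF E x1 E1_tp[OF E] x2] D1_aux[OF E E1_tp[OF E] x1 x2[symmetric]] by blast

lemma F5:
  assumes E: "E \<subseteq> {1..n} \<times> {1..n}" and x: "x \<in> POPs n" and x1: "E1 n E x = PA n E"
    and t: "t \<ge> 2"
    and IH: "\<And>s. 1 \<le> s \<Longrightarrow> s < t \<Longrightarrow> Dt n E s x = {as. mutex E s as}"
    and asD: "as \<in> Dt n E t x"
  shows "mutex E t as"
proof -
  note d = asD[unfolded Dt_mem x1]
  have len: "length as = t + 2" and rng: "set as \<subseteq> {1..n}" and dist: "distinct as"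
    and pth: "\<forall>i \<le> t. (as ! i, as ! (i + 1)) \<in> PA n E"
    and chl: "\<forall>i \<in> {2..t+1}. \<forall>j. j + 2 \<le> i \<longrightarrow> (as ! i, as ! j) \<notin> PA n E"
    and bl: "\<forall>i \<in> {1..t}. blk (fst x) (as ! i) = blk (fst x) (as ! 1)"
    and o: "\<not> ((blk (fst x) (as ! 1), blk (fst x) (as ! 0)) \<in> snd x \<or>
        (blk (fst x) (as ! 1), blk (fst x) (as ! (t + 1))) \<in> snd x)"
    using d by blast+
  have inr: "as ! i \<in> {1..n}" if "i < t + 2" for i using rng len that by (metis nth_mem subsetD)
  have pj: "padj E (as ! i) (as ! (i + 1))" if "i \<le> t" for i
  proof -
    have "(as ! i, as ! (i + 1)) \<in> PA n E" using pth that by blast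
    then show ?thesis unfolding PA_iff[OF E] .
  qed
  have npj: "\<not> padj E (as ! i) (as ! j)" if "i \<in> {2..t+1}" "j + 2 \<le> i" for i j
  proof -
    have "(as ! i, as ! j) \<notin> PA n E" using chl that by blast
    then show ?thesis unfolding PA_iff[OF E] .
  qed
  define \<beta> where "\<beta> = blk (fst x) (as ! 1)"
  have blkb: "blk (fst x) (as ! i) = \<beta>" if "1 \<le> i" "i \<le> t" for i
  proof -
    have "i \<in> {1..t}" using that by simp
    then show ?thesis using bspec[OF bl] unfolding \<beta>_def by blast
  qed
  have ob: "(\<beta>, blk (fst x) (as ! 0)) \<notin> snd x" "(\<beta>, blk (fst x) (as ! (t + 1))) \<notin> snd x"
    using o unfolding \<beta>_def by auto
  define Z0 where "Z0 = below x {blk (fst x) (as ! 0), blk (fst x) (as ! (t + 1))} - {as ! 0, as ! (t + 1)}"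
  have intZ: "as ! i \<notin> Z0" if "1 \<le> i" "i \<le> t" for i
  proof -
    have "as ! i \<notin> below x {blk (fst x) (as ! 0), blk (fst x) (as ! (t + 1))}"
      using below_mem[OF x, of "as ! i"] blkb[OF that] ob by simp
    then show ?thesis unfolding Z0_def by simp
  qed
  have n0t: "as ! 0 \<noteq> as ! (t + 1)" using dist len by (simp add: nth_eq_iff_index_eq)
  have ds0: "dsep E (as ! 0) (as ! (t + 1)) Z0"
  proof -
    have "t + 1 \<in> {2..t+1}" "0 + 2 \<le> t + 1" using t by auto
    then have "\<not> padj E (as ! (t + 1)) (as ! 0)" using npj by blast
    then have "\<not> padj E (as ! 0) (as ! (t + 1))" using padj_sym by blast
    then have "(as ! 0, as ! (t + 1)) \<notin> E1 n E x" using x1 PA_iff[OF E] by simp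
    moreover have "as ! 0 \<in> {1..n}" "as ! (t + 1) \<in> {1..n}" using inr by auto
    ultimately show ?thesis unfolding E1_mem Z0_def using n0t by simp
  qed
  define Aset where "Aset v \<longleftrightarrow> AnZ E Z0 v \<or> anc E v (as ! 0) \<or> anc E v (as ! (t + 1))" for v
  have hd_as: "hd as = as ! 0" using len by (cases as) auto
  have "as \<noteq> []" using len by auto
  then have last_as: "last as = as ! (t + 1)" using len by (simp add: last_conv_nth)
  have "\<exists>k < t + 2. \<not> Aset (as ! k)"
  proof (rule ccontr)
    assume "\<not> ?thesis"
    then have allA: "Aset (as ! k)" if "k < t + 2" for k using that by blast
    have "\<not> dsep E (hd as) (last as) Z0"
    proof (rule chain_dconn)
      show "2 \<le> length as" using len by simp
      show "hd as \<noteq> last as" using hd_as last_as n0t by simp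
      fix i
      show "Suc i < length as \<Longrightarrow> padj E (as ! i) (as ! Suc i)" using pj len by simp
      show "0 < i \<Longrightarrow> Suc i < length as \<Longrightarrow> as ! i \<notin> Z0" using intZ len by simp
      show "i < length as \<Longrightarrow> AnZ E Z0 (as ! i) \<or> anc E (as ! i) (hd as) \<or> anc E (as ! i) (last as)"
        using allA len hd_as last_as unfolding Aset_def by simp
    qed
    then show False using ds0 hd_as last_as by simp
  qed
  then obtain k0 where k0: "k0 < t + 2" "\<not> Aset (as ! k0)" by blast
  have A0: "Aset (as ! 0)" "Aset (as ! (t + 1))" unfolding Aset_def using anc_refl by blast+
  define K where "K = {k. 1 \<le> k \<and> k \<le> t \<and> \<not> Aset (as ! k)}"
  have k0K: "k0 \<in> K" unfolding K_def using k0 A0 by (cases "k0 = 0"; cases "k0 = t + 1") auto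
  define dc where "dc k = card {v \<in> {1..n}. anc E (as ! k) v}" for k
  obtain k where kK: "k \<in> K" and kmin: "\<And>m. m \<in> K \<Longrightarrow> dc k \<le> dc m"
    using ex_has_least_nat[of "\<lambda>k. k \<in> K" k0 dc] k0K by blast
  have kr: "1 \<le> k" "k \<le> t" "\<not> Aset (as ! k)" using kK unfolding K_def by auto
  have Ncl: "\<not> Aset v" if "\<not> Aset u" "anc E u v" for u v
    using that anc_trans unfolding Aset_def AnZ_def by blast
  have maxd: "anc E (as ! m) (as ! k)" if mK: "m \<in> K" and km: "anc E (as ! k) (as ! m)" for m
  proof (rule ccontr)
    assume nmk: "\<not> anc E (as ! m) (as ! k)"
    have sub: "{v \<in> {1..n}. anc E (as ! m) v} \<subseteq> {v \<in> {1..n}. anc E (as ! k) v}"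
      using km anc_trans by blast
    have "as ! k \<in> {v \<in> {1..n}. anc E (as ! k) v}" using inr kr anc_refl by simp
    moreover have "as ! k \<notin> {v \<in> {1..n}. anc E (as ! m) v}" using nmk by simp
    ultimately have "{v \<in> {1..n}. anc E (as ! m) v} \<subset> {v \<in> {1..n}. anc E (as ! k) v}" using sub by blast
    then have "dc m < dc k" unfolding dc_def by (rule psubset_card_mono[rotated]) simp
    then show False using kmin[OF mK] by simp
  qed
  define inS where "inS v \<longleftrightarrow> anc E (as ! k) v \<and> anc E v (as ! k)" for v
  have key: "\<not> anc E (as ! k) (as ! m)" if m: "m < t + 2" "\<not> inS (as ! m)" for m
  proof
    assume km: "anc E (as ! k) (as ! m)"
    then have nA: "\<not> Aset (as ! m)" using Ncl kr(3) by blast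
    have "m \<noteq> 0" using A0(1) nA by (metis)
    moreover have "m \<noteq> t + 1" using A0(2) nA by (metis)
    ultimately have "m \<noteq> 0" "m \<noteq> t + 1" by auto
    then have "m \<in> K" unfolding K_def using m nA by auto
    then have "anc E (as ! m) (as ! k)" using maxd km by blast
    then show False using km m unfolding inS_def by simp
  qed
  have nS0: "\<not> inS (as ! 0)" "\<not> inS (as ! (t + 1))"
    using Ncl[OF kr(3)] A0 unfolding inS_def by blast+
  have Sk: "inS (as ! k)" unfolding inS_def using anc_refl by blast
  define P where "P i \<longleftrightarrow> (\<forall>l. i \<le> l \<and> l \<le> k \<longrightarrow> inS (as ! l))" for i
  define i where "i = (LEAST i. P i)"
  have Pk: "P k" unfolding P_def using Sk by (metis le_antisym)
  have Pi: "P i" unfolding i_def using Pk by (rule LeastI)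
  have ik: "i \<le> k" unfolding i_def using Pk by (rule Least_le)
  have i1: "1 \<le> i"
  proof (rule ccontr)
    assume "\<not> 1 \<le> i"
    then have "i = 0" by simp
    then have "inS (as ! 0)" using Pi unfolding P_def by simp
    then show False using nS0 by simp
  qed
  have nSi: "\<not> inS (as ! (i - 1))"
  proof
    assume S: "inS (as ! (i - 1))"
    have "P (i - 1)" unfolding P_def
    proof (intro allI impI)
      fix l assume l: "i - 1 \<le> l \<and> l \<le> k"
      show "inS (as ! l)"
      proof (cases "l = i - 1")
        case True then show ?thesis using S by simp
      next
        case False then show ?thesis using Pi l unfolding P_def by auto
      qed
    qed
    then have "i \<le> i - 1" unfolding i_def by (rule Least_le)
    then show False using i1 by simp
  qed
  define Q where "Q m \<longleftrightarrow> k \<le> m \<and> \<not> inS (as ! Suc m)" for m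
  define j where "j = (LEAST m. Q m)"
  have Qt: "Q t" unfolding Q_def using kr nS0 by simp
  have Qj: "Q j" unfolding j_def using Qt by (rule LeastI)
  have jt: "j \<le> t" unfolding j_def using Qt by (rule Least_le)
  have kj: "k \<le> j" and nSj: "\<not> inS (as ! Suc j)" using Qj unfolding Q_def by auto
  have segR: "inS (as ! l)" if "k \<le> l" "l \<le> j" for l
    using that
  proof (induction l rule: dec_induct)
    case base then show ?case using Sk by simp
  next
    case (step m)
    then have "m < j" by simp
    then have "\<not> Q m" unfolding j_def by (rule not_less_Least)
    then show ?case using step unfolding Q_def by simp
  qed
  have seg: "inS (as ! l)" if "i \<le> l" "l \<le> j" for l
  proof (cases "l \<le> k")
    case True then show ?thesis using Pi that unfolding P_def by simp
  next
    case False then show ?thesis using segR that by simp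
  qed
  have ancS: "anc E (as ! l) (as ! l')" if "i \<le> l" "l \<le> j" "i \<le> l'" "l' \<le> j" for l l'
    using seg[OF that(1,2)] seg[OF that(3,4)] anc_trans unfolding inS_def by blast
  have n1: "\<not> anc E (as ! i) (as ! (i - 1))"
  proof
    assume "anc E (as ! i) (as ! (i - 1))"
    moreover have "anc E (as ! k) (as ! i)" using seg[of i] ik kj unfolding inS_def by simp
    ultimately have "anc E (as ! k) (as ! (i - 1))" using anc_trans by blast
    moreover have "i - 1 < t + 2" using ik kr by simp
    ultimately show False using key nSi by blast
  qed
  have n2: "\<not> anc E (as ! i) (as ! Suc j)"
  proof
    assume "anc E (as ! i) (as ! Suc j)"
    moreover have "anc E (as ! k) (as ! i)" using seg[of i] ik kj unfolding inS_def by simp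
    ultimately have "anc E (as ! k) (as ! Suc j)" using anc_trans by blast
    moreover have "Suc j < t + 2" using jt by simp
    ultimately show False using key nSj by blast
  qed
  show ?thesis
  proof (cases "i = 1 \<and> j = t")
    case True
    show ?thesis unfolding mutex_def
    proof (intro conjI ballI allI impI)
      show "1 \<le> t" "length as = t + 2" "distinct as" using t len dist by auto
    next
      fix l assume l: "l \<in> {1..t+1}"
      then have "l - 1 \<le> t" "l - 1 + 1 = l" by auto
      then have "padj E (as ! (l - 1)) (as ! l)" using pj by metis
      then show "padj E (as ! l) (as ! (l - 1))" using padj_sym by simp
    next
      fix l m assume "l \<in> {2..t+1}" "m + 2 \<le> l"
      then show "\<not> padj E (as ! l) (as ! m)" using npj by blast
    next
      fix l assume "l \<in> {1..t-1}"
      then have "i \<le> l" "l \<le> j" "i \<le> l + 1" "l + 1 \<le> j" using True by auto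
      then show "anc E (as ! l) (as ! (l + 1))" using ancS by blast
    next
      fix l assume "l \<in> {2..t}"
      then have "i \<le> l" "l \<le> j" "i \<le> l - 1" "l - 1 \<le> j" using True by auto
      then show "anc E (as ! l) (as ! (l - 1))" using ancS by blast
    next
      show "\<not> anc E (as ! 1) (as ! 0)" using n1 True by simp
      show "\<not> anc E (as ! 1) (as ! (t + 1))" using n2 True by simp
    qed
  next
    case False
    define s where "s = j - i + 1"
    have s1: "1 \<le> s" and st: "s < t" using False i1 ik kj jt unfolding s_def by auto
    define bs where "bs = take (s + 2) (drop (i - 1) as)"
    have lbs: "length bs = s + 2" unfolding bs_def s_def using len i1 ik kj jt by simp
    have bsn: "bs ! m = as ! (i - 1 + m)" if "m < s + 2" for m
      unfolding bs_def using that len i1 ik kj jt unfolding s_def by simp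
    have mb: "mutex E s bs" unfolding mutex_def
    proof (intro conjI ballI allI impI)
      show "1 \<le> s" "length bs = s + 2" using s1 lbs by auto
      show "distinct bs" unfolding bs_def using dist by simp
    next
      fix m assume m: "m \<in> {1..s+1}"
      have "i - 1 + m - 1 \<le> t" using m i1 jt ik kj unfolding s_def by auto
      then have "padj E (as ! (i - 1 + m - 1)) (as ! (i - 1 + m - 1 + 1))" using pj by simp
      moreover have "i - 1 + m - 1 + 1 = i - 1 + m" using m by simp
      moreover have "bs ! m = as ! (i - 1 + m)" "bs ! (m - 1) = as ! (i - 1 + m - 1)"
        using bsn m by (auto simp: algebra_simps)
      ultimately show "padj E (bs ! m) (bs ! (m - 1))" using padj_sym by simp
    next
      fix m l assume ml: "m \<in> {2..s+1}" "l + 2 \<le> m"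
      have "i - 1 + m \<in> {2..t+1}" "i - 1 + l + 2 \<le> i - 1 + m" using ml i1 jt ik kj unfolding s_def by auto
      then have "\<not> padj E (as ! (i - 1 + m)) (as ! (i - 1 + l))" using npj by blast
      moreover have "bs ! m = as ! (i - 1 + m)" "bs ! l = as ! (i - 1 + l)" using bsn ml by auto
      ultimately show "\<not> padj E (bs ! m) (bs ! l)" by simp
    next
      fix m assume m: "m \<in> {1..s-1}"
      have "bs ! m = as ! (i - 1 + m)" "bs ! (m + 1) = as ! (i - 1 + (m + 1))" using bsn m by auto
      moreover have "anc E (as ! (i - 1 + m)) (as ! (i - 1 + (m + 1)))"
        using ancS m i1 ik kj unfolding s_def by (intro ancS) auto
      ultimately show "anc E (bs ! m) (bs ! (m + 1))" by simp
    next
      fix m assume m: "m \<in> {2..s}"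
      have "bs ! m = as ! (i - 1 + m)" "bs ! (m - 1) = as ! (i - 1 + (m - 1))" using bsn m by auto
      moreover have "anc E (as ! (i - 1 + m)) (as ! (i - 1 + (m - 1)))"
        using ancS m i1 ik kj unfolding s_def by (intro ancS) auto
      ultimately show "anc E (bs ! m) (bs ! (m - 1))" by simp
    next
      have "bs ! 1 = as ! i" "bs ! 0 = as ! (i - 1)" "bs ! (s + 1) = as ! Suc j"
        using bsn i1 kj ik unfolding s_def by auto
      then show "\<not> anc E (bs ! 1) (bs ! 0)" "\<not> anc E (bs ! 1) (bs ! (s + 1))" using n1 n2 by auto
    qed
    then have "bs \<in> Dt n E s x" using IH[OF s1 st] by simp
    then have ob2: "\<not> ((blk (fst x) (bs ! 1), blk (fst x) (bs ! 0)) \<in> snd x \<or>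
        (blk (fst x) (bs ! 1), blk (fst x) (bs ! (s + 1))) \<in> snd x)" unfolding Dt_mem by blast
    have b1: "blk (fst x) (bs ! 1) = \<beta>" using bsn[of 1] blkb[of i] i1 ik kr by simp
    have refl: "(\<beta>, \<beta>) \<in> snd x" unfolding \<beta>_def using blk_refl[OF x] inr[of 1] by simp
    show ?thesis
    proof (cases "i = 1")
      case False
      then have "blk (fst x) (bs ! 0) = \<beta>" using bsn[of 0] blkb[of "i - 1"] i1 ik kr by simp
      then show ?thesis using ob2 b1 refl by simp
    next
      case True
      then have "j < t" using \<open>\<not> (i = 1 \<and> j = t)\<close> jt by simp
      then have "blk (fst x) (bs ! (s + 1)) = \<beta>" using bsn[of "s + 1"] blkb[of "Suc j"] True kj kr unfolding s_def by simp
      then show ?thesis using ob2 b1 refl by simp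
    qed
  qed
qed

lemma S5_char:
  assumes E: "E \<subseteq> {1..n} \<times> {1..n}"
  shows "S5 n E (Suc k) = {x \<in> S4 n E. \<forall>s. 1 \<le> s \<longrightarrow> s \<le> Suc k \<longrightarrow> Dt n E s x = Dt n E s (pop_of n E)}"
proof (induction k)
  case 0
  have "x \<in> S4 n E \<Longrightarrow> Dt n E 1 x = Dt n E 1 (pop_of n E)" for x
    using D1_eq[OF E] S4_D[OF E] by blast
  then have "{x \<in> S4 n E. \<forall>s. 1 \<le> s \<longrightarrow> s \<le> Suc 0 \<longrightarrow> Dt n E s x = Dt n E s (pop_of n E)} = S4 n E"
    by (auto simp: le_Suc_eq)
  then show ?case by simp
next
  case (Suc k)
  let ?t = "Suc (Suc k)"
  have "S5 n E (Suc (Suc k)) = argmax_on (S5 n E (Suc k)) (\<lambda>x. card (Dt n E ?t x))" by simp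
  also have "\<dots> = {x \<in> S5 n E (Suc k). Dt n E ?t x = Dt n E ?t (pop_of n E)}"
  proof (rule argmax_sub)
    show "pop_of n E \<in> S5 n E (Suc k)" using Suc.IH tp_S4[OF E] by simp
    show "finite (Dt n E ?t (pop_of n E))" by (rule Dt_finite)
    fix x assume "x \<in> S5 n E (Suc k)"
    then have x4: "x \<in> S4 n E" and xs: "\<And>s. 1 \<le> s \<Longrightarrow> s \<le> Suc k \<Longrightarrow> Dt n E s x = Dt n E s (pop_of n E)"
      using Suc.IH by auto
    have xP: "x \<in> POPs n" and x1: "E1 n E x = PA n E" using S4_D[OF E x4] by auto
    have IH': "Dt n E s x = {as. mutex E s as}" if "1 \<le> s" "s < ?t" for s
      using xs[of s] Dt_tp[OF E, of s] that by simp
    show "Dt n E ?t x \<subseteq> Dt n E ?t (pop_of n E)"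
    proof
      fix as assume "as \<in> Dt n E ?t x"
      then have "mutex E ?t as" using F5[OF E xP x1 _ IH'] by simp
      then show "as \<in> Dt n E ?t (pop_of n E)" using Dt_tp[OF E, of ?t] by simp
    qed
  qed
  also have "\<dots> = {x \<in> S4 n E. \<forall>s. 1 \<le> s \<longrightarrow> s \<le> Suc (Suc k) \<longrightarrow> Dt n E s x = Dt n E s (pop_of n E)}"
    unfolding Suc.IH by (auto simp: le_Suc_eq)
  finally show ?case .
qed

theorem proposition3p13:
  fixes n :: nat and E :: "(nat \<times> nat) set"
  assumes "n \<ge> 3"
    and "E \<subseteq> {1..n} \<times> {1..n}"
  shows "(\<forall>t \<in> {1..n-2}. pop_of n E \<in> S5 n E t) \<and>
         (\<forall>t \<in> {1..n-2}. \<forall>x \<in> S5 n E t. \<forall>as.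
            as \<in> Dt n E t x \<longleftrightarrow> mutex E t as)"
proof (intro conjI ballI allI)
  fix t assume t: "t \<in> {1..n-2}"
  then obtain k where k: "t = Suc k" by (cases t) auto
  show "pop_of n E \<in> S5 n E t" unfolding k S5_char[OF assms(2)] using tp_S4[OF assms(2)] by simp
next
  fix t x as assume t: "t \<in> {1..n-2}" and x: "x \<in> S5 n E t"
  then obtain k where k: "t = Suc k" by (cases t) auto
  have "Dt n E t x = Dt n E t (pop_of n E)" using x t unfolding k S5_char[OF assms(2)] by auto
  also have "\<dots> = {as. mutex E t as}" using Dt_tp[OF assms(2)] t by simp
  finally show "as \<in> Dt n E t x \<longleftrightarrow> mutex E t as" by simp
qed


end
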